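(* Let $F\colon \mathcal{D}_1 \to \mathcal{D}_2$ be a symmetric monoidal dagger functor between fermionically dagger compact categories such that every iso-positive involution in $\mathcal{D}_2$ is the identity. Then $F$ is $B\mathbb{Z}/2$-equivariant, i.e. $F((-1)^F_{x}) = (-1)^F_{F(x)}$ for every object $x$ of $\mathcal{D}_1$.
   Context: A dagger category is a category $\mathcal{D}$ with a contravariant strict involution $\dagger\colon \mathcal{D}\to\mathcal{D}^{\mathrm{op}}$ that is the identity on objects. A symmetric monoidal dagger category is a dagger category that is also symmetric monoidal such that $\otimes$ is a $\dagger$-functor and the unitors, associator and braiding $\sigma$ are unitary ($f^\dagger=f^{-1}$). A symmetric monoidal dagger functor is a symmetric monoidal functor $F$ that is a dagger functor ($F(f^\dagger)=F(f)^\dagger$) and whose structure isomorphisms $F(c_1)\otimes F(c_2)\to F(c_1\otimes c_2)$ and $1\to F(1)$ are unitary. Each $\mathcal{D}_i$ comes with a unitary monoidal $B\mathbb{Z}/2$-action, i.e. a monoidal natural involution $(-1)^F\colon \mathrm{id}\Rightarrow \mathrm{id}$ of the identity functor with each component unitary. An endomorphism $f\colon c\to c$ is iso-positive if $f=g^\dagger g$ for some isomorphism $g\colon c\to c'$. A symmetric monoidal dagger category $\mathcal{D}$ with such a $B\mathbb{Z}/2$-action is fermionically dagger compact if it has duals and, for every object $x$, the standard dual functor of its Hermitian completion sends $x$ (with trivial Hermitian pairing) to a dual whose dual Hermitian pairing, after twisting by $(-1)^F_{x^*}$, is again iso-positive; equivalently (as stated in the paper), every object $x$ admits a duality $\mathrm{ev}_x\colon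 x^*\otimes x\to 1$, $\mathrm{coev}_x\colon 1\to x\otimes x^*$ such that $\sigma_{x^*,x}\circ \mathrm{ev}_x^\dagger = ((-1)^F_x\otimes \mathrm{id}_{x^*})\circ \mathrm{coev}_x$. *)

theory Defs
  imports Main
begin

text \<open>A symmetric monoidal dagger category with a B Z/2-action, encoded concretely:
objects of type 'o, morphisms of type 'm, hom-sets, composition (cmp g f = g after f),
identities, dagger, tensor on objects and morphisms, unit object, associator
asc a b c : (a*b)*c -> a*(b*c), left unitor lun a : 1*a -> a, right unitor
run a : a*1 -> a, braiding brd a b : a*b -> b*a, and the fermion parity par a : a -> a.\<close>

record ('o, 'm) dcat =
  Obj :: "'o set"
  Hom :: "'o \<Rightarrow> 'o \<Rightarrow> 'm set"
  cmp :: "'m \<Rightarrow> 'm \<Rightarrow> 'm"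
  idm :: "'o \<Rightarrow> 'm"
  dag :: "'m \<Rightarrow> 'm"
  tno :: "'o \<Rightarrow> 'o \<Rightarrow> 'o"
  tnm :: "'m \<Rightarrow> 'm \<Rightarrow> 'm"
  unt :: "'o"
  asc :: "'o \<Rightarrow> 'o \<Rightarrow> 'o \<Rightarrow> 'm"
  lun :: "'o \<Rightarrow> 'm"
  run :: "'o \<Rightarrow> 'm"
  brd :: "'o \<Rightarrow> 'o \<Rightarrow> 'm"
  par :: "'o \<Rightarrow> 'm"

definition is_category :: "('o, 'm, 'x) dcat_scheme \<Rightarrow> bool" where
  "is_category C \<longleftrightarrow>
    (\<forall>a b f. f \<in> Hom C a b \<longrightarrow> a \<in> Obj C \<and> b \<in> Obj C) \<and>
    (\<forall>a \<in> Obj C. idm C a \<in> Hom C a a) \<and>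
    (\<forall>a b c f g. f \<in> Hom C a b \<longrightarrow> g \<in> Hom C b c \<longrightarrow> cmp C g f \<in> Hom C a c) \<and>
    (\<forall>a b f. f \<in> Hom C a b \<longrightarrow> cmp C (idm C b) f = f \<and> cmp C f (idm C a) = f) \<and>
    (\<forall>a b c d f g h. f \<in> Hom C a b \<longrightarrow> g \<in> Hom C b c \<longrightarrow> h \<in> Hom C c d \<longrightarrow>
        cmp C h (cmp C g f) = cmp C (cmp C h g) f)"

definition is_dagger_category :: "('o, 'm, 'x) dcat_scheme \<Rightarrow> bool" where
  "is_dagger_category C \<longleftrightarrow> is_category C \<and>
    (\<forall>a b f. f \<in> Hom C a b \<longrightarrow> dag C f \<in> Hom C b a \<and> dag C (dag C f) = f) \<and>
    (\<forall>a b c f g. f \<in> Hom C a b \<longrightarrow> g \<in> Hom C b c \<longrightarrow>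
        dag C (cmp C g f) = cmp C (dag C f) (dag C g)) \<and>
    (\<forall>a \<in> Obj C. dag C (idm C a) = idm C a)"

definition unitary :: "('o, 'm, 'x) dcat_scheme \<Rightarrow> 'm \<Rightarrow> 'o \<Rightarrow> 'o \<Rightarrow> bool" where
  "unitary C f a b \<longleftrightarrow> f \<in> Hom C a b \<and>
     cmp C (dag C f) f = idm C a \<and> cmp C f (dag C f) = idm C b"

definition iso :: "('o, 'm, 'x) dcat_scheme \<Rightarrow> 'm \<Rightarrow> 'o \<Rightarrow> 'o \<Rightarrow> bool" where
  "iso C g a b \<longleftrightarrow> g \<in> Hom C a b \<and>
     (\<exists>h \<in> Hom C b a. cmp C h g = idm C a \<and> cmp C g h = idm C b)"

definition iso_positive :: "('o, 'm, 'x) dcat_scheme \<Rightarrow> 'm \<Rightarrow> 'o \<Rightarrow> bool" where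
  "iso_positive C f c \<longleftrightarrow> f \<in> Hom C c c \<and>
     (\<exists>c' g. iso C g c c' \<and> f = cmp C (dag C g) g)"

definition is_sym_monoidal_dagger_category :: "('o, 'm, 'x) dcat_scheme \<Rightarrow> bool" where
  "is_sym_monoidal_dagger_category C \<longleftrightarrow> is_dagger_category C \<and>
    unt C \<in> Obj C \<and>
    (\<forall>a \<in> Obj C. \<forall>b \<in> Obj C. tno C a b \<in> Obj C) \<and>
    (\<forall>a b c d f g. f \<in> Hom C a b \<longrightarrow> g \<in> Hom C c d \<longrightarrow>
        tnm C f g \<in> Hom C (tno C a c) (tno C b d)) \<and>
    (\<forall>a \<in> Obj C. \<forall>b \<in> Obj C. tnm C (idm C a) (idm C b) = idm C (tno C a b)) \<and>
    (\<forall>a b c a' b' c' f f' g g'. f \<in> Hom C a b \<longrightarrow> f' \<in> Hom C b c \<longrightarrow>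
        g \<in> Hom C a' b' \<longrightarrow> g' \<in> Hom C b' c' \<longrightarrow>
        tnm C (cmp C f' f) (cmp C g' g) = cmp C (tnm C f' g') (tnm C f g)) \<and>
    (\<forall>a b c d f g. f \<in> Hom C a b \<longrightarrow> g \<in> Hom C c d \<longrightarrow>
        dag C (tnm C f g) = tnm C (dag C f) (dag C g)) \<and>
    (\<forall>a \<in> Obj C. \<forall>b \<in> Obj C. \<forall>c \<in> Obj C.
        unitary C (asc C a b c) (tno C (tno C a b) c) (tno C a (tno C b c))) \<and>
    (\<forall>a \<in> Obj C. unitary C (lun C a) (tno C (unt C) a) a) \<and>
    (\<forall>a \<in> Obj C. unitary C (run C a) (tno C a (unt C)) a) \<and>
    (\<forall>a \<in> Obj C. \<forall>b \<in> Obj C. unitary C (brd C a b) (tno C a b) (tno C b a)) \<and>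
    (\<forall>a b a' b' a'' b'' f g h. f \<in> Hom C a b \<longrightarrow> g \<in> Hom C a' b' \<longrightarrow> h \<in> Hom C a'' b'' \<longrightarrow>
        cmp C (asc C b b' b'') (tnm C (tnm C f g) h) =
        cmp C (tnm C f (tnm C g h)) (asc C a a' a'')) \<and>
    (\<forall>a b f. f \<in> Hom C a b \<longrightarrow>
        cmp C (lun C b) (tnm C (idm C (unt C)) f) = cmp C f (lun C a)) \<and>
    (\<forall>a b f. f \<in> Hom C a b \<longrightarrow>
        cmp C (run C b) (tnm C f (idm C (unt C))) = cmp C f (run C a)) \<and>
    (\<forall>a b c d f g. f \<in> Hom C a b \<longrightarrow> g \<in> Hom C c d \<longrightarrow>
        cmp C (brd C b d) (tnm C f g) = cmp C (tnm C g f) (brd C a c)) \<and>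
    (\<forall>a \<in> Obj C. \<forall>b \<in> Obj C. \<forall>c \<in> Obj C. \<forall>d \<in> Obj C.
        cmp C (asc C a b (tno C c d)) (asc C (tno C a b) c d) =
        cmp C (tnm C (idm C a) (asc C b c d))
          (cmp C (asc C a (tno C b c) d) (tnm C (asc C a b c) (idm C d)))) \<and>
    (\<forall>a \<in> Obj C. \<forall>b \<in> Obj C.
        cmp C (tnm C (idm C a) (lun C b)) (asc C a (unt C) b) = tnm C (run C a) (idm C b)) \<and>
    (\<forall>a \<in> Obj C. \<forall>b \<in> Obj C. \<forall>c \<in> Obj C.
        cmp C (asc C b c a) (cmp C (brd C a (tno C b c)) (asc C a b c)) =
        cmp C (tnm C (idm C b) (brd C a c))
          (cmp C (asc C b a c) (tnm C (brd C a b) (idm C c)))) \<and>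
    (\<forall>a \<in> Obj C. \<forall>b \<in> Obj C. cmp C (brd C b a) (brd C a b) = idm C (tno C a b))"

definition is_BZ2_action :: "('o, 'm, 'x) dcat_scheme \<Rightarrow> bool" where
  "is_BZ2_action C \<longleftrightarrow>
    (\<forall>a \<in> Obj C. par C a \<in> Hom C a a \<and> cmp C (par C a) (par C a) = idm C a
                  \<and> unitary C (par C a) a a) \<and>
    (\<forall>a b f. f \<in> Hom C a b \<longrightarrow> cmp C (par C b) f = cmp C f (par C a)) \<and>
    (\<forall>a \<in> Obj C. \<forall>b \<in> Obj C. par C (tno C a b) = tnm C (par C a) (par C b)) \<and>
    par C (unt C) = idm C (unt C)"

definition is_duality :: "('o, 'm, 'x) dcat_scheme \<Rightarrow> 'o \<Rightarrow> 'o \<Rightarrow> 'm \<Rightarrow> 'm \<Rightarrow> bool" where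
  "is_duality C x xs ev coev \<longleftrightarrow> xs \<in> Obj C \<and>
     ev \<in> Hom C (tno C xs x) (unt C) \<and> coev \<in> Hom C (unt C) (tno C x xs) \<and>
     cmp C (run C x) (cmp C (tnm C (idm C x) ev) (cmp C (asc C x xs x)
        (cmp C (tnm C coev (idm C x)) (dag C (lun C x))))) = idm C x \<and>
     cmp C (lun C xs) (cmp C (tnm C ev (idm C xs)) (cmp C (dag C (asc C xs x xs))
        (cmp C (tnm C (idm C xs) coev) (dag C (run C xs))))) = idm C xs"

definition is_fermionically_dagger_compact :: "('o, 'm, 'x) dcat_scheme \<Rightarrow> bool" where
  "is_fermionically_dagger_compact C \<longleftrightarrow>
    is_sym_monoidal_dagger_category C \<and> is_BZ2_action C \<and>
    (\<forall>x \<in> Obj C. \<exists>xs ev coev. is_duality C x xs ev coev \<and>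
        cmp C (brd C xs x) (dag C ev) = cmp C (tnm C (par C x) (idm C xs)) coev)"

definition is_sym_monoidal_dagger_functor ::
  "('o, 'm, 'x) dcat_scheme \<Rightarrow> ('p, 'n, 'y) dcat_scheme \<Rightarrow> ('o \<Rightarrow> 'p) \<Rightarrow> ('m \<Rightarrow> 'n)
   \<Rightarrow> ('o \<Rightarrow> 'o \<Rightarrow> 'n) \<Rightarrow> 'n \<Rightarrow> bool" where
  "is_sym_monoidal_dagger_functor C D Fo Fm mu eps \<longleftrightarrow>
    (\<forall>a \<in> Obj C. Fo a \<in> Obj D) \<and>
    (\<forall>a b f. f \<in> Hom C a b \<longrightarrow> Fm f \<in> Hom D (Fo a) (Fo b)) \<and>
    (\<forall>a b c f g. f \<in> Hom C a b \<longrightarrow> g \<in> Hom C b c \<longrightarrow>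
        Fm (cmp C g f) = cmp D (Fm g) (Fm f)) \<and>
    (\<forall>a \<in> Obj C. Fm (idm C a) = idm D (Fo a)) \<and>
    (\<forall>a b f. f \<in> Hom C a b \<longrightarrow> Fm (dag C f) = dag D (Fm f)) \<and>
    (\<forall>a \<in> Obj C. \<forall>b \<in> Obj C. unitary D (mu a b) (tno D (Fo a) (Fo b)) (Fo (tno C a b))) \<and>
    unitary D eps (unt D) (Fo (unt C)) \<and>
    (\<forall>a b c d f g. f \<in> Hom C a b \<longrightarrow> g \<in> Hom C c d \<longrightarrow>
        cmp D (mu b d) (tnm D (Fm f) (Fm g)) = cmp D (Fm (tnm C f g)) (mu a c)) \<and>
    (\<forall>a \<in> Obj C. \<forall>b \<in> Obj C. \<forall>c \<in> Obj C.
        cmp D (Fm (asc C a b c)) (cmp D (mu (tno C a b) c) (tnm D (mu a b) (idm D (Fo c)))) =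
        cmp D (mu a (tno C b c)) (cmp D (tnm D (idm D (Fo a)) (mu b c))
                                       (asc D (Fo a) (Fo b) (Fo c)))) \<and>
    (\<forall>a \<in> Obj C. lun D (Fo a) =
        cmp D (Fm (lun C a)) (cmp D (mu (unt C) a) (tnm D eps (idm D (Fo a))))) \<and>
    (\<forall>a \<in> Obj C. run D (Fo a) =
        cmp D (Fm (run C a)) (cmp D (mu a (unt C)) (tnm D (idm D (Fo a)) eps))) \<and>
    (\<forall>a \<in> Obj C. \<forall>b \<in> Obj C.
        cmp D (Fm (brd C a b)) (mu a b) = cmp D (mu b a) (brd D (Fo a) (Fo b)))"

end

theory Submission
  imports Defs
begin

locale smc =
  fixes C :: "('o,'m,'x) dcat_scheme" (structure)
  assumes smc: "is_sym_monoidal_dagger_category C"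
begin

abbreviation cp (infixr "\<cdot>" 55) where "g \<cdot> f \<equiv> cmp C g f"
abbreviation tn (infixr "\<otimes>" 60) where "f \<otimes> g \<equiv> tnm C f g"
abbreviation tob (infixr "\<odot>" 60) where "a \<odot> b \<equiv> tno C a b"
abbreviation ide where "ide a \<equiv> idm C a"
abbreviation dg ("_\<^sup>\<dagger>" [1000] 999) where "f\<^sup>\<dagger> \<equiv> dag C f"
abbreviation U where "U \<equiv> unt C"
abbreviation HM where "HM a b \<equiv> Hom C a b"
abbreviation OB where "OB \<equiv> Obj C"

lemmas SM = smc[unfolded is_sym_monoidal_dagger_category_def is_dagger_category_def is_category_def]

lemma hom_obj': "\<forall>a b f. f \<in> HM a b \<longrightarrow> a \<in> OB \<and> b \<in> OB" using SM by (elim conjE) assumption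
lemma hom_obj: "f \<in> HM a b \<Longrightarrow> a \<in> OB" "f \<in> HM a b \<Longrightarrow> b \<in> OB" using hom_obj' by blast+

lemma ty_id'[rule_format]: "\<forall>a \<in> OB. ide a \<in> HM a a" using SM by (elim conjE) assumption
lemma ty_cmp'[rule_format]: "\<forall>a b c f g. f \<in> HM a b \<longrightarrow> g \<in> HM b c \<longrightarrow> g \<cdot> f \<in> HM a c" using SM by (elim conjE) assumption
lemma idlr'[rule_format]: "\<forall>a b f. f \<in> HM a b \<longrightarrow> ide b \<cdot> f = f \<and> f \<cdot> ide a = f" using SM by (elim conjE) assumption
lemma assoc'[rule_format]: "\<forall>a b c d f g h. f \<in> HM a b \<longrightarrow> g \<in> HM b c \<longrightarrow> h \<in> HM c d \<longrightarrow>
        h \<cdot> (g \<cdot> f) = (h \<cdot> g) \<cdot> f" using SM by (elim conjE) assumption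
lemma ty_id[intro]: "a \<in> OB \<Longrightarrow> ide a \<in> HM a a" by (rule ty_id')
lemma ty_cmp[intro]: "f \<in> HM a b \<Longrightarrow> g \<in> HM b c \<Longrightarrow> g \<cdot> f \<in> HM a c" by (rule ty_cmp')
lemma idl[simp]: "f \<in> HM a b \<Longrightarrow> ide b \<cdot> f = f" using idlr' by blast
lemma idr[simp]: "f \<in> HM a b \<Longrightarrow> f \<cdot> ide a = f" using idlr' by blast
lemma assoc: "f \<in> HM a b \<Longrightarrow> g \<in> HM b c \<Longrightarrow> h \<in> HM c d \<Longrightarrow> h \<cdot> (g \<cdot> f) = (h \<cdot> g) \<cdot> f"
  by (rule assoc')

lemma dag1'[rule_format]: "\<forall>a b f. f \<in> HM a b \<longrightarrow> f\<^sup>\<dagger> \<in> HM b a \<and> (f\<^sup>\<dagger>)\<^sup>\<dagger> = f" using SM by (elim conjE) assumption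
lemma dag2'[rule_format]: "\<forall>a b c f g. f \<in> HM a b \<longrightarrow> g \<in> HM b c \<longrightarrow>
        (g \<cdot> f)\<^sup>\<dagger> = f\<^sup>\<dagger> \<cdot> g\<^sup>\<dagger>" using SM by (elim conjE) assumption
lemma dag3'[rule_format]: "\<forall>a \<in> OB. (ide a)\<^sup>\<dagger> = ide a" using SM by (elim conjE) assumption
lemma ty_dag[intro]: "f \<in> HM a b \<Longrightarrow> f\<^sup>\<dagger> \<in> HM b a" using dag1' by blast
lemma dagdag[simp]: "f \<in> HM a b \<Longrightarrow> (f\<^sup>\<dagger>)\<^sup>\<dagger> = f" using dag1' by blast
lemma dag_cmp: "f \<in> HM a b \<Longrightarrow> g \<in> HM b c \<Longrightarrow> (g \<cdot> f)\<^sup>\<dagger> = f\<^sup>\<dagger> \<cdot> g\<^sup>\<dagger>" by (rule dag2')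
lemma dag_id[simp]: "a \<in> OB \<Longrightarrow> (ide a)\<^sup>\<dagger> = ide a" by (rule dag3')

lemma ty_U[intro]: "U \<in> OB" using SM by (elim conjE) assumption
lemma ty_tob'[rule_format]: "\<forall>a \<in> OB. \<forall>b \<in> OB. a \<odot> b \<in> OB" using SM by (elim conjE) assumption
lemma ty_tob[intro]: "a \<in> OB \<Longrightarrow> b \<in> OB \<Longrightarrow> a \<odot> b \<in> OB" by (rule ty_tob')
lemma ty_tn'[rule_format]: "\<forall>a b c d f g. f \<in> HM a b \<longrightarrow> g \<in> HM c d \<longrightarrow>
        f \<otimes> g \<in> HM (a \<odot> c) (b \<odot> d)" using SM by (elim conjE) assumption
lemma ty_tn[intro]: "f \<in> HM a b \<Longrightarrow> g \<in> HM c d \<Longrightarrow> f \<otimes> g \<in> HM (a \<odot> c) (b \<odot> d)" by (rule ty_tn')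
lemma tn_id'[rule_format]: "\<forall>a \<in> OB. \<forall>b \<in> OB. ide a \<otimes> ide b = ide (a \<odot> b)" using SM by (elim conjE) assumption
lemma tn_id[simp]: "a \<in> OB \<Longrightarrow> b \<in> OB \<Longrightarrow> ide a \<otimes> ide b = ide (a \<odot> b)" by (rule tn_id')
lemma tn_cmp'[rule_format]: "\<forall>a b c a' b' c' f f' g g'. f \<in> HM a b \<longrightarrow> f' \<in> HM b c \<longrightarrow>
        g \<in> HM a' b' \<longrightarrow> g' \<in> HM b' c' \<longrightarrow>
        (f' \<cdot> f) \<otimes> (g' \<cdot> g) = (f' \<otimes> g') \<cdot> (f \<otimes> g)" using SM by (elim conjE) assumption
lemma tn_cmp: "f \<in> HM a b \<Longrightarrow> f' \<in> HM b c \<Longrightarrow> g \<in> HM a' b' \<Longrightarrow> g' \<in> HM b' c' \<Longrightarrow>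
   (f' \<cdot> f) \<otimes> (g' \<cdot> g) = (f' \<otimes> g') \<cdot> (f \<otimes> g)" by (rule tn_cmp')
lemma dag_tn'[rule_format]: "\<forall>a b c d f g. f \<in> HM a b \<longrightarrow> g \<in> HM c d \<longrightarrow>
        (f \<otimes> g)\<^sup>\<dagger> = f\<^sup>\<dagger> \<otimes> g\<^sup>\<dagger>" using SM by (elim conjE) assumption
lemma dag_tn: "f \<in> HM a b \<Longrightarrow> g \<in> HM c d \<Longrightarrow> (f \<otimes> g)\<^sup>\<dagger> = f\<^sup>\<dagger> \<otimes> g\<^sup>\<dagger>" by (rule dag_tn')

lemma u_asc'[rule_format]: "\<forall>a \<in> OB. \<forall>b \<in> OB. \<forall>c \<in> OB.
        unitary C (asc C a b c) ((a \<odot> b) \<odot> c) (a \<odot> (b \<odot> c))" using SM by (elim conjE) assumption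
lemma u_lun'[rule_format]: "\<forall>a \<in> OB. unitary C (lun C a) (U \<odot> a) a" using SM by (elim conjE) assumption
lemma u_run'[rule_format]: "\<forall>a \<in> OB. unitary C (run C a) (a \<odot> U) a" using SM by (elim conjE) assumption
lemma u_brd'[rule_format]: "\<forall>a \<in> OB. \<forall>b \<in> OB. unitary C (brd C a b) (a \<odot> b) (b \<odot> a)" using SM by (elim conjE) assumption

lemma ty_asc[intro]: "a \<in> OB \<Longrightarrow> b \<in> OB \<Longrightarrow> c \<in> OB \<Longrightarrow> asc C a b c \<in> HM ((a \<odot> b) \<odot> c) (a \<odot> (b \<odot> c))"
  using u_asc'[of a b c] by (simp add: unitary_def)
lemma ty_lun[intro]: "a \<in> OB \<Longrightarrow> lun C a \<in> HM (U \<odot> a) a"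
  using u_lun'[of a] by (simp add: unitary_def)
lemma ty_run[intro]: "a \<in> OB \<Longrightarrow> run C a \<in> HM (a \<odot> U) a"
  using u_run'[of a] by (simp add: unitary_def)
lemma ty_brd[intro]: "a \<in> OB \<Longrightarrow> b \<in> OB \<Longrightarrow> brd C a b \<in> HM (a \<odot> b) (b \<odot> a)"
  using u_brd'[of a b] by (simp add: unitary_def)
lemma asc_u: "a \<in> OB \<Longrightarrow> b \<in> OB \<Longrightarrow> c \<in> OB \<Longrightarrow> (asc C a b c)\<^sup>\<dagger> \<cdot> asc C a b c = ide ((a \<odot> b) \<odot> c)"
   "a \<in> OB \<Longrightarrow> b \<in> OB \<Longrightarrow> c \<in> OB \<Longrightarrow> asc C a b c \<cdot> (asc C a b c)\<^sup>\<dagger> = ide (a \<odot> (b \<odot> c))"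
  using u_asc'[of a b c] by (simp_all add: unitary_def)
lemma lun_u: "a \<in> OB \<Longrightarrow> (lun C a)\<^sup>\<dagger> \<cdot> lun C a = ide (U \<odot> a)" "a \<in> OB \<Longrightarrow> lun C a \<cdot> (lun C a)\<^sup>\<dagger> = ide a"
  using u_lun'[of a] by (simp_all add: unitary_def)
lemma run_u: "a \<in> OB \<Longrightarrow> (run C a)\<^sup>\<dagger> \<cdot> run C a = ide (a \<odot> U)" "a \<in> OB \<Longrightarrow> run C a \<cdot> (run C a)\<^sup>\<dagger> = ide a"
  using u_run'[of a] by (simp_all add: unitary_def)
lemma brd_u: "a \<in> OB \<Longrightarrow> b \<in> OB \<Longrightarrow> (brd C a b)\<^sup>\<dagger> \<cdot> brd C a b = ide (a \<odot> b)"
   "a \<in> OB \<Longrightarrow> b \<in> OB \<Longrightarrow> brd C a b \<cdot> (brd C a b)\<^sup>\<dagger> = ide (b \<odot> a)"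
  using u_brd'[of a b] by (simp_all add: unitary_def)

lemma nat_asc'[rule_format]: "\<forall>a b a' b' a'' b'' f g h. f \<in> HM a b \<longrightarrow> g \<in> HM a' b' \<longrightarrow> h \<in> HM a'' b'' \<longrightarrow>
        asc C b b' b'' \<cdot> ((f \<otimes> g) \<otimes> h) = (f \<otimes> (g \<otimes> h)) \<cdot> asc C a a' a''" using SM by (elim conjE) assumption
lemma nat_lun'[rule_format]: "\<forall>a b f. f \<in> HM a b \<longrightarrow>
        lun C b \<cdot> (ide U \<otimes> f) = f \<cdot> lun C a" using SM by (elim conjE) assumption
lemma nat_run'[rule_format]: "\<forall>a b f. f \<in> HM a b \<longrightarrow>
        run C b \<cdot> (f \<otimes> ide U) = f \<cdot> run C a" using SM by (elim conjE) assumption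
lemma nat_brd'[rule_format]: "\<forall>a b c d f g. f \<in> HM a b \<longrightarrow> g \<in> HM c d \<longrightarrow>
        brd C b d \<cdot> (f \<otimes> g) = (g \<otimes> f) \<cdot> brd C a c" using SM by (elim conjE) assumption
lemma pent'[rule_format]: "\<forall>a \<in> OB. \<forall>b \<in> OB. \<forall>c \<in> OB. \<forall>d \<in> OB.
        asc C a b (c \<odot> d) \<cdot> asc C (a \<odot> b) c d =
        (ide a \<otimes> asc C b c d) \<cdot>
          (asc C a (b \<odot> c) d \<cdot> (asc C a b c \<otimes> ide d))" using SM by (elim conjE) assumption
lemma tri'[rule_format]: "\<forall>a \<in> OB. \<forall>b \<in> OB.
        (ide a \<otimes> lun C b) \<cdot> asc C a U b = run C a \<otimes> ide b" using SM by (elim conjE) assumption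

lemma nat_asc: "f \<in> HM a b \<Longrightarrow> g \<in> HM a' b' \<Longrightarrow> h \<in> HM a'' b'' \<Longrightarrow>
        asc C b b' b'' \<cdot> ((f \<otimes> g) \<otimes> h) = (f \<otimes> (g \<otimes> h)) \<cdot> asc C a a' a''" by (rule nat_asc')
lemma nat_lun: "f \<in> HM a b \<Longrightarrow> lun C b \<cdot> (ide U \<otimes> f) = f \<cdot> lun C a" by (rule nat_lun')
lemma nat_run: "f \<in> HM a b \<Longrightarrow> run C b \<cdot> (f \<otimes> ide U) = f \<cdot> run C a" by (rule nat_run')
lemma nat_brd: "f \<in> HM a b \<Longrightarrow> g \<in> HM c d \<Longrightarrow> brd C b d \<cdot> (f \<otimes> g) = (g \<otimes> f) \<cdot> brd C a c" by (rule nat_brd')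
lemma pent: "a \<in> OB \<Longrightarrow> b \<in> OB \<Longrightarrow> c \<in> OB \<Longrightarrow> d \<in> OB \<Longrightarrow>
        asc C a b (c \<odot> d) \<cdot> asc C (a \<odot> b) c d =
        (ide a \<otimes> asc C b c d) \<cdot> (asc C a (b \<odot> c) d \<cdot> (asc C a b c \<otimes> ide d))" by (rule pent')
lemma tri: "a \<in> OB \<Longrightarrow> b \<in> OB \<Longrightarrow> (ide a \<otimes> lun C b) \<cdot> asc C a U b = run C a \<otimes> ide b" by (rule tri')

end

definition sr :: "('o \<times> 'm \<times> 'o) option \<Rightarrow> 'o" where "sr x = fst (the x)"
definition mr :: "('o \<times> 'm \<times> 'o) option \<Rightarrow> 'm" where "mr x = fst (snd (the x))"
definition tg :: "('o \<times> 'm \<times> 'o) option \<Rightarrow> 'o" where "tg x = snd (snd (the x))"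

context smc begin

declare ty_U[simp] ty_tob[simp]

definition good :: "('o \<times> 'm \<times> 'o) option \<Rightarrow> bool" where
  "good x \<longleftrightarrow> x \<noteq> None \<and> mr x \<in> HM (sr x) (tg x)"
definition Ar :: "'o \<Rightarrow> 'm \<Rightarrow> 'o \<Rightarrow> ('o \<times> 'm \<times> 'o) option" where
  "Ar a f b = (if f \<in> HM a b then Some (a, f, b) else None)"
definition comp :: "('o \<times> 'm \<times> 'o) option \<Rightarrow> ('o \<times> 'm \<times> 'o) option \<Rightarrow> ('o \<times> 'm \<times> 'o) option"
  (infixr "\<circ>\<circ>" 55) where
  "x \<circ>\<circ> y = (if good x \<and> good y \<and> sr x = tg y then Some (sr y, mr x \<cdot> mr y, tg x) else None)"
definition tens :: "('o \<times> 'm \<times> 'o) option \<Rightarrow> ('o \<times> 'm \<times> 'o) option \<Rightarrow> ('o \<times> 'm \<times> 'o) option"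
  (infixr "\<box>" 60) where
  "x \<box> y = (if good x \<and> good y then Some (sr x \<odot> sr y, mr x \<otimes> mr y, tg x \<odot> tg y) else None)"
definition dgr :: "('o \<times> 'm \<times> 'o) option \<Rightarrow> ('o \<times> 'm \<times> 'o) option" ("_\<^sup>\<star>" [1000] 999) where
  "x\<^sup>\<star> = (if good x then Some (tg x, (mr x)\<^sup>\<dagger>, sr x) else None)"
definition Id where "Id a = Ar a (ide a) a"
definition As where "As a b c = Ar ((a \<odot> b) \<odot> c) (asc C a b c) (a \<odot> (b \<odot> c))"
definition Lu where "Lu a = Ar (U \<odot> a) (lun C a) a"
definition Ru where "Ru a = Ar (a \<odot> U) (run C a) a"
definition Br where "Br a b = Ar (a \<odot> b) (brd C a b) (b \<odot> a)"

lemma good_None[simp]: "\<not> good None" by (simp add: good_def)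

lemma good_comp[simp]: "good (x \<circ>\<circ> y) \<longleftrightarrow> good x \<and> good y \<and> sr x = tg y"
  unfolding comp_def good_def sr_def tg_def mr_def by (auto intro: ty_cmp)
lemma sr_comp[simp]: "good x \<Longrightarrow> good y \<Longrightarrow> sr x = tg y \<Longrightarrow> sr (x \<circ>\<circ> y) = sr y"
  unfolding comp_def sr_def by auto
lemma tg_comp[simp]: "good x \<Longrightarrow> good y \<Longrightarrow> sr x = tg y \<Longrightarrow> tg (x \<circ>\<circ> y) = tg x"
  unfolding comp_def tg_def by auto
lemma mr_comp: "good x \<Longrightarrow> good y \<Longrightarrow> sr x = tg y \<Longrightarrow> mr (x \<circ>\<circ> y) = mr x \<cdot> mr y"
  unfolding comp_def mr_def by auto

lemma good_tens[simp]: "good (x \<box> y) \<longleftrightarrow> good x \<and> good y"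
  unfolding tens_def good_def sr_def tg_def mr_def by (auto intro: ty_tn)
lemma sr_tens[simp]: "good x \<Longrightarrow> good y \<Longrightarrow> sr (x \<box> y) = sr x \<odot> sr y"
  unfolding tens_def sr_def by auto
lemma tg_tens[simp]: "good x \<Longrightarrow> good y \<Longrightarrow> tg (x \<box> y) = tg x \<odot> tg y"
  unfolding tens_def tg_def by auto
lemma mr_tens: "good x \<Longrightarrow> good y \<Longrightarrow> mr (x \<box> y) = mr x \<otimes> mr y"
  unfolding tens_def mr_def by auto

lemma good_dgr[simp]: "good (x\<^sup>\<star>) \<longleftrightarrow> good x"
  unfolding dgr_def good_def sr_def tg_def mr_def by (auto intro: ty_dag)
lemma sr_dgr[simp]: "good x \<Longrightarrow> sr (x\<^sup>\<star>) = tg x"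
  unfolding dgr_def sr_def tg_def by auto
lemma tg_dgr[simp]: "good x \<Longrightarrow> tg (x\<^sup>\<star>) = sr x"
  unfolding dgr_def sr_def tg_def by auto
lemma mr_dgr: "good x \<Longrightarrow> mr (x\<^sup>\<star>) = (mr x)\<^sup>\<dagger>"
  unfolding dgr_def mr_def by auto

lemma good_Ar[simp]: "good (Ar a f b) \<longleftrightarrow> f \<in> HM a b"
  unfolding Ar_def good_def sr_def tg_def mr_def by auto
lemma sr_Ar[simp]: "f \<in> HM a b \<Longrightarrow> sr (Ar a f b) = a" unfolding Ar_def sr_def by auto
lemma tg_Ar[simp]: "f \<in> HM a b \<Longrightarrow> tg (Ar a f b) = b" unfolding Ar_def tg_def by auto
lemma mr_Ar[simp]: "f \<in> HM a b \<Longrightarrow> mr (Ar a f b) = f" unfolding Ar_def mr_def by auto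

lemma arr_eqI: "good x \<Longrightarrow> good y \<Longrightarrow> sr x = sr y \<Longrightarrow> tg x = tg y \<Longrightarrow> mr x = mr y \<Longrightarrow> x = y"
  unfolding good_def sr_def tg_def mr_def by (cases x; cases y) auto
lemma good_Ar_eq: "good x \<Longrightarrow> x = Ar (sr x) (mr x) (tg x)"
  unfolding good_def sr_def tg_def mr_def Ar_def by (cases x) auto

lemma comp_Ar: "f \<in> HM a b \<Longrightarrow> g \<in> HM b c \<Longrightarrow> Ar b g c \<circ>\<circ> Ar a f b = Ar a (g \<cdot> f) c"
  unfolding comp_def by (simp add: Ar_def good_def sr_def tg_def mr_def ty_cmp)
lemma tens_Ar: "f \<in> HM a b \<Longrightarrow> g \<in> HM c d \<Longrightarrow> Ar a f b \<box> Ar c g d = Ar (a \<odot> c) (f \<otimes> g) (b \<odot> d)"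
  unfolding tens_def by (simp add: Ar_def good_def sr_def tg_def mr_def ty_tn)
lemma dgr_Ar: "f \<in> HM a b \<Longrightarrow> (Ar a f b)\<^sup>\<star> = Ar b (f\<^sup>\<dagger>) a"
  unfolding dgr_def by (simp add: Ar_def good_def sr_def tg_def mr_def ty_dag)

lemma good_Id[simp]: "a \<in> OB \<Longrightarrow> good (Id a)" unfolding Id_def by (simp add: ty_id)
lemma sr_Id[simp]: "a \<in> OB \<Longrightarrow> sr (Id a) = a" unfolding Id_def by (simp add: ty_id)
lemma tg_Id[simp]: "a \<in> OB \<Longrightarrow> tg (Id a) = a" unfolding Id_def by (simp add: ty_id)
lemma good_As[simp]: "a \<in> OB \<Longrightarrow> b \<in> OB \<Longrightarrow> c \<in> OB \<Longrightarrow> good (As a b c)" unfolding As_def by (simp add: ty_asc)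
lemma sr_As[simp]: "a \<in> OB \<Longrightarrow> b \<in> OB \<Longrightarrow> c \<in> OB \<Longrightarrow> sr (As a b c) = (a \<odot> b) \<odot> c" unfolding As_def by (simp add: ty_asc)
lemma tg_As[simp]: "a \<in> OB \<Longrightarrow> b \<in> OB \<Longrightarrow> c \<in> OB \<Longrightarrow> tg (As a b c) = a \<odot> (b \<odot> c)" unfolding As_def by (simp add: ty_asc)
lemma good_Lu[simp]: "a \<in> OB \<Longrightarrow> good (Lu a)" unfolding Lu_def by (simp add: ty_lun)
lemma sr_Lu[simp]: "a \<in> OB \<Longrightarrow> sr (Lu a) = U \<odot> a" unfolding Lu_def by (simp add: ty_lun)
lemma tg_Lu[simp]: "a \<in> OB \<Longrightarrow> tg (Lu a) = a" unfolding Lu_def by (simp add: ty_lun)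
lemma good_Ru[simp]: "a \<in> OB \<Longrightarrow> good (Ru a)" unfolding Ru_def by (simp add: ty_run)
lemma sr_Ru[simp]: "a \<in> OB \<Longrightarrow> sr (Ru a) = a \<odot> U" unfolding Ru_def by (simp add: ty_run)
lemma tg_Ru[simp]: "a \<in> OB \<Longrightarrow> tg (Ru a) = a" unfolding Ru_def by (simp add: ty_run)
lemma good_Br[simp]: "a \<in> OB \<Longrightarrow> b \<in> OB \<Longrightarrow> good (Br a b)" unfolding Br_def by (simp add: ty_brd)
lemma sr_Br[simp]: "a \<in> OB \<Longrightarrow> b \<in> OB \<Longrightarrow> sr (Br a b) = a \<odot> b" unfolding Br_def by (simp add: ty_brd)
lemma tg_Br[simp]: "a \<in> OB \<Longrightarrow> b \<in> OB \<Longrightarrow> tg (Br a b) = b \<odot> a" unfolding Br_def by (simp add: ty_brd)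

lemma good_obj: "good x \<Longrightarrow> sr x \<in> OB" "good x \<Longrightarrow> tg x \<in> OB"
  unfolding good_def by (auto dest: hom_obj)

lemma comp_None: "\<not> good (x \<circ>\<circ> y) \<Longrightarrow> x \<circ>\<circ> y = None"
proof -
  assume "\<not> good (x \<circ>\<circ> y)"
  then have "\<not> (good x \<and> good y \<and> sr x = tg y)" by simp
  then show ?thesis unfolding comp_def by simp
qed
lemma tens_None: "\<not> good (x \<box> y) \<Longrightarrow> x \<box> y = None"
proof -
  assume "\<not> good (x \<box> y)"
  then have "\<not> (good x \<and> good y)" by simp
  then show ?thesis unfolding tens_def by simp
qed
lemma dgr_None: "\<not> good (x\<^sup>\<star>) \<Longrightarrow> x\<^sup>\<star> = None"
proof -
  assume "\<not> good (x\<^sup>\<star>)"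
  then have "\<not> good x" by simp
  then show ?thesis unfolding dgr_def by simp
qed

lemma cassoc: "(x \<circ>\<circ> y) \<circ>\<circ> z = x \<circ>\<circ> (y \<circ>\<circ> z)"
proof (cases "good x \<and> good y \<and> good z \<and> sr x = tg y \<and> sr y = tg z")
  case True
  then show ?thesis
    apply (intro arr_eqI) apply (simp_all add: mr_comp)
    using assoc[of "mr z" "sr z" "tg z" "mr y" "tg y" "mr x" "tg x"] by (auto simp: good_def)
next
  case False
  then have "\<not> good ((x \<circ>\<circ> y) \<circ>\<circ> z)" "\<not> good (x \<circ>\<circ> (y \<circ>\<circ> z))" by auto
  then show ?thesis by (metis comp_None)
qed

lemma ext: "p \<circ>\<circ> q = r \<Longrightarrow> p \<circ>\<circ> (q \<circ>\<circ> X) = r \<circ>\<circ> X" by (metis cassoc)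

lemma aidl: assumes "good x" "tg x = b" shows "Id b \<circ>\<circ> x = x"
proof -
  have b: "b \<in> OB" using good_obj assms by auto
  have m: "mr x \<in> HM (sr x) b" using assms good_def by auto
  show ?thesis apply (rule arr_eqI) using assms b apply (simp_all add: mr_comp)
    unfolding Id_def using m b by (simp add: ty_id)
qed
lemma aidr: assumes "good x" "sr x = a" shows "x \<circ>\<circ> Id a = x"
proof -
  have b: "a \<in> OB" using good_obj assms by auto
  have m: "mr x \<in> HM a (tg x)" using assms good_def by auto
  show ?thesis apply (rule arr_eqI) using assms b apply (simp_all add: mr_comp)
    unfolding Id_def using m b by (simp add: ty_id)
qed

lemma interchange: "good x \<Longrightarrow> good y \<Longrightarrow> good z \<Longrightarrow> good w \<Longrightarrow> sr x = tg y \<Longrightarrow> sr z = tg w \<Longrightarrow>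
  (x \<circ>\<circ> y) \<box> (z \<circ>\<circ> w) = (x \<box> z) \<circ>\<circ> (y \<box> w)"
  apply (rule arr_eqI) apply (simp_all add: mr_comp mr_tens)
  using tn_cmp[of "mr y" "sr y" "tg y" "mr x" "tg x" "mr w" "sr w" "tg w" "mr z" "tg z"] by (auto simp: good_def)

lemma tens_Id: "a \<in> OB \<Longrightarrow> b \<in> OB \<Longrightarrow> Id a \<box> Id b = Id (a \<odot> b)"
  unfolding Id_def by (simp add: tens_Ar ty_id)

lemma dgr_comp: "(x \<circ>\<circ> y)\<^sup>\<star> = y\<^sup>\<star> \<circ>\<circ> x\<^sup>\<star>"
proof (cases "good x \<and> good y \<and> sr x = tg y")
  case True then show ?thesis
    apply (intro arr_eqI) apply (simp_all add: mr_comp mr_dgr)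
    using dag_cmp[of "mr y" "sr y" "tg y" "mr x" "tg x"] by (auto simp: good_def)
next
  case False
  then have "\<not> good ((x \<circ>\<circ> y)\<^sup>\<star>)" "\<not> good (y\<^sup>\<star> \<circ>\<circ> x\<^sup>\<star>)" by auto
  then show ?thesis by (metis comp_None dgr_None)
qed
lemma dgr_tens: "(x \<box> y)\<^sup>\<star> = x\<^sup>\<star> \<box> y\<^sup>\<star>"
proof (cases "good x \<and> good y")
  case True then show ?thesis
    apply (intro arr_eqI) apply (simp_all add: mr_tens mr_dgr)
    using dag_tn[of "mr x" "sr x" "tg x" "mr y" "sr y" "tg y"] by (auto simp: good_def)
next
  case False
  then have "\<not> good ((x \<box> y)\<^sup>\<star>)" "\<not> good (x\<^sup>\<star> \<box> y\<^sup>\<star>)" by auto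
  then show ?thesis by (metis tens_None dgr_None)
qed
lemma dgr_dgr: "good x \<Longrightarrow> (x\<^sup>\<star>)\<^sup>\<star> = x"
  apply (rule arr_eqI) apply (simp_all add: mr_dgr) using dagdag by (auto simp: good_def)
lemma dgr_Id: "a \<in> OB \<Longrightarrow> (Id a)\<^sup>\<star> = Id a"
  unfolding Id_def by (simp add: dgr_Ar ty_id)

lemma As_u1: "a \<in> OB \<Longrightarrow> b \<in> OB \<Longrightarrow> c \<in> OB \<Longrightarrow> (As a b c)\<^sup>\<star> \<circ>\<circ> As a b c = Id ((a \<odot> b) \<odot> c)"
  unfolding As_def Id_def by (simp add: dgr_Ar comp_Ar ty_dag ty_asc asc_u)
lemma As_u2: "a \<in> OB \<Longrightarrow> b \<in> OB \<Longrightarrow> c \<in> OB \<Longrightarrow> As a b c \<circ>\<circ> (As a b c)\<^sup>\<star> = Id (a \<odot> (b \<odot> c))"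
  unfolding As_def Id_def by (simp add: dgr_Ar comp_Ar ty_dag ty_asc asc_u)
lemma Lu_u1: "a \<in> OB \<Longrightarrow> (Lu a)\<^sup>\<star> \<circ>\<circ> Lu a = Id (U \<odot> a)"
  unfolding Lu_def Id_def by (simp add: dgr_Ar comp_Ar ty_dag ty_lun lun_u)
lemma Lu_u2: "a \<in> OB \<Longrightarrow> Lu a \<circ>\<circ> (Lu a)\<^sup>\<star> = Id a"
  unfolding Lu_def Id_def by (simp add: dgr_Ar comp_Ar ty_dag ty_lun lun_u)
lemma Ru_u1: "a \<in> OB \<Longrightarrow> (Ru a)\<^sup>\<star> \<circ>\<circ> Ru a = Id (a \<odot> U)"
  unfolding Ru_def Id_def by (simp add: dgr_Ar comp_Ar ty_dag ty_run run_u)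
lemma Ru_u2: "a \<in> OB \<Longrightarrow> Ru a \<circ>\<circ> (Ru a)\<^sup>\<star> = Id a"
  unfolding Ru_def Id_def by (simp add: dgr_Ar comp_Ar ty_dag ty_run run_u)
lemma Br_u1: "a \<in> OB \<Longrightarrow> b \<in> OB \<Longrightarrow> (Br a b)\<^sup>\<star> \<circ>\<circ> Br a b = Id (a \<odot> b)"
  unfolding Br_def Id_def by (simp add: dgr_Ar comp_Ar ty_dag ty_brd brd_u)
lemma Br_u2: "a \<in> OB \<Longrightarrow> b \<in> OB \<Longrightarrow> Br a b \<circ>\<circ> (Br a b)\<^sup>\<star> = Id (b \<odot> a)"
  unfolding Br_def Id_def by (simp add: dgr_Ar comp_Ar ty_dag ty_brd brd_u)


lemma mr_Id[simp]: "a \<in> OB \<Longrightarrow> mr (Id a) = ide a" unfolding Id_def by (simp add: ty_id)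
lemma mr_As[simp]: "a \<in> OB \<Longrightarrow> b \<in> OB \<Longrightarrow> c \<in> OB \<Longrightarrow> mr (As a b c) = asc C a b c" unfolding As_def by (simp add: ty_asc)
lemma mr_Lu[simp]: "a \<in> OB \<Longrightarrow> mr (Lu a) = lun C a" unfolding Lu_def by (simp add: ty_lun)
lemma mr_Ru[simp]: "a \<in> OB \<Longrightarrow> mr (Ru a) = run C a" unfolding Ru_def by (simp add: ty_run)
lemma mr_Br[simp]: "a \<in> OB \<Longrightarrow> b \<in> OB \<Longrightarrow> mr (Br a b) = brd C a b" unfolding Br_def by (simp add: ty_brd)

lemma goodD: "good x \<Longrightarrow> mr x \<in> HM (sr x) (tg x)" unfolding good_def by auto

lemma nat_As_a: "good x \<Longrightarrow> good y \<Longrightarrow> good z \<Longrightarrow> sr x = a \<Longrightarrow> sr y = a' \<Longrightarrow> sr z = a'' \<Longrightarrow>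
  tg x = b \<Longrightarrow> tg y = b' \<Longrightarrow> tg z = b'' \<Longrightarrow>
  As b b' b'' \<circ>\<circ> ((x \<box> y) \<box> z) = (x \<box> (y \<box> z)) \<circ>\<circ> As a a' a''"
  apply (rule arr_eqI)
  using good_obj[of x] good_obj[of y] good_obj[of z] apply (simp_all add: mr_comp mr_tens)
  using goodD[of x] goodD[of y] goodD[of z] by (intro nat_asc) auto

lemma nat_Lu_a: "good x \<Longrightarrow> sr x = a \<Longrightarrow> tg x = b \<Longrightarrow> Lu b \<circ>\<circ> (Id U \<box> x) = x \<circ>\<circ> Lu a"
  apply (rule arr_eqI)
  using good_obj[of x] apply (simp_all add: mr_comp mr_tens)
  using goodD[of x] by (intro nat_lun) auto
lemma nat_Ru_a: "good x \<Longrightarrow> sr x = a \<Longrightarrow> tg x = b \<Longrightarrow> Ru b \<circ>\<circ> (x \<box> Id U) = x \<circ>\<circ> Ru a"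
  apply (rule arr_eqI)
  using good_obj[of x] apply (simp_all add: mr_comp mr_tens)
  using goodD[of x] by (intro nat_run) auto
lemma nat_Br_a: "good x \<Longrightarrow> good y \<Longrightarrow> sr x = a \<Longrightarrow> tg x = b \<Longrightarrow> sr y = c \<Longrightarrow> tg y = d \<Longrightarrow>
   Br b d \<circ>\<circ> (x \<box> y) = (y \<box> x) \<circ>\<circ> Br a c"
  apply (rule arr_eqI)
  using good_obj[of x] good_obj[of y] apply (simp_all add: mr_comp mr_tens)
  using goodD[of x] goodD[of y] by (intro nat_brd) auto
lemma pent_a: "a \<in> OB \<Longrightarrow> b \<in> OB \<Longrightarrow> c \<in> OB \<Longrightarrow> d \<in> OB \<Longrightarrow>
  As a b (c \<odot> d) \<circ>\<circ> As (a \<odot> b) c d = (Id a \<box> As b c d) \<circ>\<circ> As a (b \<odot> c) d \<circ>\<circ> (As a b c \<box> Id d)"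
  apply (rule arr_eqI) apply (simp_all add: mr_comp mr_tens) by (rule pent; assumption)
lemma tri_a: "a \<in> OB \<Longrightarrow> b \<in> OB \<Longrightarrow> (Id a \<box> Lu b) \<circ>\<circ> As a U b = Ru a \<box> Id b"
  apply (rule arr_eqI) apply (simp_all add: mr_comp mr_tens) by (rule tri; assumption)

lemma brd_inv'[rule_format]: "\<forall>a \<in> OB. \<forall>b \<in> OB. brd C b a \<cdot> brd C a b = ide (a \<odot> b)" using SM by (elim conjE) assumption
lemma Br_inv: "a \<in> OB \<Longrightarrow> b \<in> OB \<Longrightarrow> Br b a \<circ>\<circ> Br a b = Id (a \<odot> b)"
  apply (rule arr_eqI) apply (simp_all add: mr_comp) by (rule brd_inv'; assumption)

lemma interchange_l: "good x \<Longrightarrow> good y \<Longrightarrow> sr x = tg y \<Longrightarrow> a \<in> OB \<Longrightarrow> Id a \<box> (x \<circ>\<circ> y) = (Id a \<box> x) \<circ>\<circ> (Id a \<box> y)"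
  using interchange[of "Id a" "Id a" x y] aidl[of "Id a" a] by simp
lemma interchange_r: "good x \<Longrightarrow> good y \<Longrightarrow> sr x = tg y \<Longrightarrow> a \<in> OB \<Longrightarrow> (x \<circ>\<circ> y) \<box> Id a = (x \<box> Id a) \<circ>\<circ> (y \<box> Id a)"
  using interchange[of x y "Id a" "Id a"] aidl[of "Id a" a] by simp

lemma cancel_Ul: "good f \<Longrightarrow> good g \<Longrightarrow> sr f = sr g \<Longrightarrow> tg f = tg g \<Longrightarrow> Id U \<box> f = Id U \<box> g \<Longrightarrow> f = g"
proof -
  assume a: "good f" "good g" "sr f = sr g" "tg f = tg g" "Id U \<box> f = Id U \<box> g"
  have o: "sr f \<in> OB" "tg f \<in> OB" using a good_obj by auto
  have "f = f \<circ>\<circ> Lu (sr f) \<circ>\<circ> (Lu (sr f))\<^sup>\<star>" using o a by (simp add: Lu_u2 aidr)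
  also have "\<dots> = Lu (tg f) \<circ>\<circ> (Id U \<box> f) \<circ>\<circ> (Lu (sr f))\<^sup>\<star>"
  proof -
    have n: "Lu (tg f) \<circ>\<circ> (Id U \<box> f) = f \<circ>\<circ> Lu (sr f)" using a nat_Lu_a[of f "sr f" "tg f"] by simp
    show ?thesis using ext[OF n] by (simp only: cassoc)
  qed
  also have "\<dots> = Lu (tg g) \<circ>\<circ> (Id U \<box> g) \<circ>\<circ> (Lu (sr g))\<^sup>\<star>" using a by simp
  also have "\<dots> = g \<circ>\<circ> Lu (sr g) \<circ>\<circ> (Lu (sr g))\<^sup>\<star>"
  proof -
    have n: "Lu (tg g) \<circ>\<circ> (Id U \<box> g) = g \<circ>\<circ> Lu (sr g)" using a nat_Lu_a[of g "sr g" "tg g"] by simp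
    show ?thesis using ext[OF n] by (simp only: cassoc)
  qed
  also have "\<dots> = g" using o a by (simp add: Lu_u2 aidr)
  finally show ?thesis .
qed
lemma cancel_Ur: "good f \<Longrightarrow> good g \<Longrightarrow> sr f = sr g \<Longrightarrow> tg f = tg g \<Longrightarrow> f \<box> Id U = g \<box> Id U \<Longrightarrow> f = g"
proof -
  assume a: "good f" "good g" "sr f = sr g" "tg f = tg g" "f \<box> Id U = g \<box> Id U"
  have o: "sr f \<in> OB" "tg f \<in> OB" using a good_obj by auto
  have "f = f \<circ>\<circ> Ru (sr f) \<circ>\<circ> (Ru (sr f))\<^sup>\<star>" using o a by (simp add: Ru_u2 aidr)
  also have "\<dots> = Ru (tg f) \<circ>\<circ> (f \<box> Id U) \<circ>\<circ> (Ru (sr f))\<^sup>\<star>"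
  proof -
    have n: "Ru (tg f) \<circ>\<circ> (f \<box> Id U) = f \<circ>\<circ> Ru (sr f)" using a nat_Ru_a[of f "sr f" "tg f"] by simp
    show ?thesis using ext[OF n] by (simp only: cassoc)
  qed
  also have "\<dots> = Ru (tg g) \<circ>\<circ> (g \<box> Id U) \<circ>\<circ> (Ru (sr g))\<^sup>\<star>" using a by simp
  also have "\<dots> = g \<circ>\<circ> Ru (sr g) \<circ>\<circ> (Ru (sr g))\<^sup>\<star>"
  proof -
    have n: "Ru (tg g) \<circ>\<circ> (g \<box> Id U) = g \<circ>\<circ> Ru (sr g)" using a nat_Ru_a[of g "sr g" "tg g"] by simp
    show ?thesis using ext[OF n] by (simp only: cassoc)
  qed
  also have "\<dots> = g" using o a by (simp add: Ru_u2 aidr)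
  finally show ?thesis .
qed

lemma cancel_r: "good f \<Longrightarrow> good g \<Longrightarrow> good j \<Longrightarrow> good j' \<Longrightarrow> sr f = tg j \<Longrightarrow> sr g = tg j \<Longrightarrow>
   sr j = tg j' \<Longrightarrow> j \<circ>\<circ> j' = Id (tg j) \<Longrightarrow> f \<circ>\<circ> j = g \<circ>\<circ> j \<Longrightarrow> f = g"
  by (metis aidr cassoc)
lemma cancel_l: "good f \<Longrightarrow> good g \<Longrightarrow> good j \<Longrightarrow> good j' \<Longrightarrow> tg f = sr j \<Longrightarrow> tg g = sr j \<Longrightarrow>
   tg j = sr j' \<Longrightarrow> j' \<circ>\<circ> j = Id (sr j) \<Longrightarrow> j \<circ>\<circ> f = j \<circ>\<circ> g \<Longrightarrow> f = g"
  by (metis aidl cassoc)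

end

context smc begin

lemma ext3: "p \<circ>\<circ> q \<circ>\<circ> r = s \<Longrightarrow> p \<circ>\<circ> q \<circ>\<circ> r \<circ>\<circ> X = s \<circ>\<circ> X" by (metis cassoc)
lemma ext4: "p \<circ>\<circ> q \<circ>\<circ> r \<circ>\<circ> t = s \<Longrightarrow> p \<circ>\<circ> q \<circ>\<circ> r \<circ>\<circ> t \<circ>\<circ> X = s \<circ>\<circ> X" by (metis cassoc)

lemmas G = good_comp good_tens good_dgr good_Id good_As good_Lu good_Ru good_Br
  sr_comp tg_comp sr_tens tg_tens sr_dgr tg_dgr sr_Id tg_Id sr_As tg_As sr_Lu tg_Lu sr_Ru tg_Ru
  sr_Br tg_Br ty_U ty_tob simp_thms

definition uni where "uni j \<longleftrightarrow> good j \<and> j\<^sup>\<star> \<circ>\<circ> j = Id (sr j) \<and> j \<circ>\<circ> j\<^sup>\<star> = Id (tg j)"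

lemma uni_good: "uni j \<Longrightarrow> good j" unfolding uni_def by auto
lemma uni_comp: assumes "uni x" "uni y" "sr x = tg y" shows "uni (x \<circ>\<circ> y)"
proof -
  have g: "good x" "good y" using assms uni_def by auto
  have 1: "(x \<circ>\<circ> y)\<^sup>\<star> \<circ>\<circ> (x \<circ>\<circ> y) = Id (sr y)"
    using assms g good_obj[of x] good_obj[of y] unfolding uni_def
    by (simp add: dgr_comp cassoc ext[of "x\<^sup>\<star>" x] aidl)
  have 2: "(x \<circ>\<circ> y) \<circ>\<circ> (x \<circ>\<circ> y)\<^sup>\<star> = Id (tg x)"
    using assms g good_obj[of x] good_obj[of y] unfolding uni_def
    by (simp add: dgr_comp cassoc ext[of y "y\<^sup>\<star>"] aidl)
  show ?thesis using 1 2 g assms unfolding uni_def by simp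
qed
lemma uni_tens: assumes "uni x" "uni y" shows "uni (x \<box> y)"
proof -
  have g: "good x" "good y" using assms uni_def by auto
  have 1: "(x \<box> y)\<^sup>\<star> \<circ>\<circ> (x \<box> y) = Id (sr x \<odot> sr y)"
    using assms g good_obj[of x] good_obj[of y] unfolding uni_def
    by (simp add: dgr_tens interchange[symmetric] tens_Id)
  have 2: "(x \<box> y) \<circ>\<circ> (x \<box> y)\<^sup>\<star> = Id (tg x \<odot> tg y)"
    using assms g good_obj[of x] good_obj[of y] unfolding uni_def
    by (simp add: dgr_tens interchange[symmetric] tens_Id)
  show ?thesis using 1 2 g assms unfolding uni_def by simp
qed
lemma uni_dgr: assumes "uni x" shows "uni (x\<^sup>\<star>)"
  using assms unfolding uni_def by (simp add: dgr_dgr)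
lemma uni_Id: "a \<in> OB \<Longrightarrow> uni (Id a)" unfolding uni_def by (simp add: dgr_Id aidl)
lemma uni_As: "a \<in> OB \<Longrightarrow> b \<in> OB \<Longrightarrow> c \<in> OB \<Longrightarrow> uni (As a b c)" unfolding uni_def by (simp add: As_u1 As_u2)
lemma uni_Lu: "a \<in> OB \<Longrightarrow> uni (Lu a)" unfolding uni_def by (simp add: Lu_u1 Lu_u2)
lemma uni_Ru: "a \<in> OB \<Longrightarrow> uni (Ru a)" unfolding uni_def by (simp add: Ru_u1 Ru_u2)
lemma uni_Br: "a \<in> OB \<Longrightarrow> b \<in> OB \<Longrightarrow> uni (Br a b)" unfolding uni_def by (simp add: Br_u1 Br_u2)
lemmas uniI = uni_comp uni_tens uni_dgr uni_Id uni_As uni_Lu uni_Ru uni_Br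

lemma cancel_ur: "uni j \<Longrightarrow> good f \<Longrightarrow> good g \<Longrightarrow> sr f = tg j \<Longrightarrow> sr g = tg j \<Longrightarrow> f \<circ>\<circ> j = g \<circ>\<circ> j \<Longrightarrow> f = g"
  apply (rule cancel_r[of f g j "j\<^sup>\<star>"]) by (auto simp: uni_def)
lemma cancel_ul: "uni j \<Longrightarrow> good f \<Longrightarrow> good g \<Longrightarrow> tg f = sr j \<Longrightarrow> tg g = sr j \<Longrightarrow> j \<circ>\<circ> f = j \<circ>\<circ> g \<Longrightarrow> f = g"
  apply (rule cancel_l[of f g j "j\<^sup>\<star>"]) by (auto simp: uni_def)

lemma K1: assumes o: "a \<in> OB" "b \<in> OB" shows "Lu (a \<odot> b) \<circ>\<circ> As U a b = Lu a \<box> Id b"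
proof -
  let ?J = "As U (U \<odot> a) b \<circ>\<circ> (As U U a \<box> Id b)"
  have "(Id U \<box> (Lu (a \<odot> b) \<circ>\<circ> As U a b)) \<circ>\<circ> ?J
     = (Id U \<box> Lu (a \<odot> b)) \<circ>\<circ> (Id U \<box> As U a b) \<circ>\<circ> As U (U \<odot> a) b \<circ>\<circ> (As U U a \<box> Id b)"
    using o by (simp add: interchange_l cassoc)
  also have "\<dots> = (Id U \<box> Lu (a \<odot> b)) \<circ>\<circ> As U U (a \<odot> b) \<circ>\<circ> As (U \<odot> U) a b"
    using o pent_a[of U U a b] by (simp only: G cassoc)
  also have "\<dots> = (Ru U \<box> Id (a \<odot> b)) \<circ>\<circ> As (U \<odot> U) a b"
    using o ext[OF tri_a[of U "a \<odot> b"]] by (simp only: G cassoc)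
  also have "\<dots> = (Ru U \<box> (Id a \<box> Id b)) \<circ>\<circ> As (U \<odot> U) a b"
    using o by (simp only: G tens_Id)
  also have "\<dots> = As U a b \<circ>\<circ> ((Ru U \<box> Id a) \<box> Id b)"
    using o nat_As_a[of "Ru U" "Id a" "Id b" "U \<odot> U" a b U a b] by (simp only: G)
  also have "\<dots> = As U a b \<circ>\<circ> (((Id U \<box> Lu a) \<circ>\<circ> As U U a) \<box> Id b)"
    using o tri_a[of U a] by (simp only: G)
  also have "\<dots> = As U a b \<circ>\<circ> ((Id U \<box> Lu a) \<box> Id b) \<circ>\<circ> (As U U a \<box> Id b)"
    using o by (simp add: interchange_r)
  also have "\<dots> = (Id U \<box> (Lu a \<box> Id b)) \<circ>\<circ> ?J"
    using o ext[OF nat_As_a[of "Id U" "Lu a" "Id b" U "U \<odot> a" b U a b]] by (simp only: G cassoc)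
  finally have e: "(Id U \<box> (Lu (a \<odot> b) \<circ>\<circ> As U a b)) \<circ>\<circ> ?J = (Id U \<box> (Lu a \<box> Id b)) \<circ>\<circ> ?J" .
  have "Id U \<box> (Lu (a \<odot> b) \<circ>\<circ> As U a b) = Id U \<box> (Lu a \<box> Id b)"
    apply (rule cancel_ur[OF _ _ _ _ _ e])
    using o by (simp_all add: uniI)
  then show ?thesis
    apply (rule cancel_Ul[rotated 4]) using o by (simp_all only: G)
qed


lemma K2: assumes o: "X \<in> OB" "a \<in> OB" shows "(Id X \<box> Ru a) \<circ>\<circ> As X a U = Ru (X \<odot> a)"
proof -
  have "As X a U \<circ>\<circ> (((Id X \<box> Ru a) \<circ>\<circ> As X a U) \<box> Id U)
      = As X a U \<circ>\<circ> ((Id X \<box> Ru a) \<box> Id U) \<circ>\<circ> (As X a U \<box> Id U)"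
    using o by (simp add: interchange_r)
  also have "\<dots> = (Id X \<box> (Ru a \<box> Id U)) \<circ>\<circ> As X (a \<odot> U) U \<circ>\<circ> (As X a U \<box> Id U)"
    using o ext[OF nat_As_a[of "Id X" "Ru a" "Id U" X "a \<odot> U" U X a U]] by (simp only: G cassoc)
  also have "\<dots> = (Id X \<box> ((Id a \<box> Lu U) \<circ>\<circ> As a U U)) \<circ>\<circ> As X (a \<odot> U) U \<circ>\<circ> (As X a U \<box> Id U)"
    using o tri_a[of a U] by (simp only: G)
  also have "\<dots> = (Id X \<box> (Id a \<box> Lu U)) \<circ>\<circ> (Id X \<box> As a U U) \<circ>\<circ> As X (a \<odot> U) U \<circ>\<circ> (As X a U \<box> Id U)"
    using o by (simp add: interchange_l cassoc)
  also have "\<dots> = (Id X \<box> (Id a \<box> Lu U)) \<circ>\<circ> As X a (U \<odot> U) \<circ>\<circ> As (X \<odot> a) U U"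
    using o pent_a[of X a U U] by (simp only: G cassoc)
  also have "\<dots> = As X a U \<circ>\<circ> ((Id X \<box> Id a) \<box> Lu U) \<circ>\<circ> As (X \<odot> a) U U"
    using o ext[OF nat_As_a[of "Id X" "Id a" "Lu U" X a "U \<odot> U" X a U, symmetric]] by (simp only: G cassoc)
  also have "\<dots> = As X a U \<circ>\<circ> (Id (X \<odot> a) \<box> Lu U) \<circ>\<circ> As (X \<odot> a) U U"
    using o by (simp only: G tens_Id)
  also have "\<dots> = As X a U \<circ>\<circ> (Ru (X \<odot> a) \<box> Id U)"
    using o tri_a[of "X \<odot> a" U] by (simp only: G)
  finally have e: "As X a U \<circ>\<circ> (((Id X \<box> Ru a) \<circ>\<circ> As X a U) \<box> Id U) = As X a U \<circ>\<circ> (Ru (X \<odot> a) \<box> Id U)" .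
  have "((Id X \<box> Ru a) \<circ>\<circ> As X a U) \<box> Id U = Ru (X \<odot> a) \<box> Id U"
    apply (rule cancel_ul[OF _ _ _ _ _ e]) using o by (simp_all add: uniI)
  then show ?thesis
    apply (rule cancel_Ur[rotated 4]) using o by (simp_all only: G)
qed

lemma Lu_tn: assumes o: "a \<in> OB" shows "Lu (U \<odot> a) = Id U \<box> Lu a"
proof -
  have "Lu a \<circ>\<circ> Lu (U \<odot> a) = Lu a \<circ>\<circ> (Id U \<box> Lu a)" using nat_Lu_a[of "Lu a" "U \<odot> a" a] o by simp
  then show ?thesis apply (rule cancel_ul[rotated 5]) using o by (simp_all add: uniI)
qed

lemma K3: "Lu U = Ru U"
proof -
  have "Lu U \<box> Id U = (Id U \<box> Lu U) \<circ>\<circ> As U U U" using K1[of U U] Lu_tn[of U] by simp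
  also have "\<dots> = Ru U \<box> Id U" using tri_a[of U U] by simp
  finally show ?thesis apply (rule cancel_Ur[rotated 4]) by (simp_all)
qed

lemma tri_inv: assumes o: "X \<in> OB" "a \<in> OB" shows "As X U a \<circ>\<circ> ((Ru X)\<^sup>\<star> \<box> Id a) = Id X \<box> (Lu a)\<^sup>\<star>"
proof -
  have "(Id X \<box> Lu a) \<circ>\<circ> As X U a \<circ>\<circ> ((Ru X)\<^sup>\<star> \<box> Id a) = (Ru X \<box> Id a) \<circ>\<circ> ((Ru X)\<^sup>\<star> \<box> Id a)"
    using o ext[OF tri_a[of X a]] by simp
  also have "\<dots> = Id (X \<odot> a)" using o by (simp add: interchange[symmetric] Ru_u2 aidl tens_Id)
  also have "\<dots> = (Id X \<box> Lu a) \<circ>\<circ> (Id X \<box> (Lu a)\<^sup>\<star>)" using o by (simp add: interchange[symmetric] Lu_u2 aidl tens_Id)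
  finally show ?thesis apply (rule cancel_ul[rotated 5]) using o by (simp_all add: uniI)
qed

definition Lm where "Lm X a b w y = Lu b \<circ>\<circ> (w \<box> Id b) \<circ>\<circ> (As X a b)\<^sup>\<star> \<circ>\<circ> (Id X \<box> y) \<circ>\<circ> (Ru X)\<^sup>\<star>"

lemma snake:
  assumes o: "X \<in> OB" "a \<in> OB" "b \<in> OB"
    and e: "good e" "sr e = b \<odot> a" "tg e = U"
    and c: "good c" "sr c = U" "tg c = a \<odot> b"
    and w: "good w" "sr w = X \<odot> a" "tg w = U"
    and z: "Ru a \<circ>\<circ> (Id a \<box> e) \<circ>\<circ> As a b a \<circ>\<circ> (c \<box> Id a) \<circ>\<circ> (Lu a)\<^sup>\<star> = Id a"
  shows "e \<circ>\<circ> (Lm X a b w c \<box> Id a) = w"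
proof -
  have "e \<circ>\<circ> (Lm X a b w c \<box> Id a) = e \<circ>\<circ> (Lu b \<box> Id a) \<circ>\<circ> ((w \<box> Id b) \<box> Id a) \<circ>\<circ> ((As X a b)\<^sup>\<star> \<box> Id a)
      \<circ>\<circ> ((Id X \<box> c) \<box> Id a) \<circ>\<circ> ((Ru X)\<^sup>\<star> \<box> Id a)"
    unfolding Lm_def using o e c w by (simp add: interchange_r)
  also have "\<dots> = Lu U \<circ>\<circ> (Id U \<box> e) \<circ>\<circ> As U b a \<circ>\<circ> ((w \<box> Id b) \<box> Id a) \<circ>\<circ> ((As X a b)\<^sup>\<star> \<box> Id a)
      \<circ>\<circ> ((Id X \<box> c) \<box> Id a) \<circ>\<circ> ((Ru X)\<^sup>\<star> \<box> Id a)"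
  proof -
    have "e \<circ>\<circ> (Lu b \<box> Id a) = e \<circ>\<circ> Lu (b \<odot> a) \<circ>\<circ> As U b a" using K1[of b a] o by simp
    also have "\<dots> = Lu U \<circ>\<circ> (Id U \<box> e) \<circ>\<circ> As U b a"
    proof -
      have n: "Lu U \<circ>\<circ> (Id U \<box> e) = e \<circ>\<circ> Lu (b \<odot> a)" using nat_Lu_a[of e "b \<odot> a" U] o e by simp
      show ?thesis using ext[OF n] by (simp only: cassoc)
    qed
    finally have tt: "e \<circ>\<circ> (Lu b \<box> Id a) = Lu U \<circ>\<circ> (Id U \<box> e) \<circ>\<circ> As U b a" .
    show ?thesis using ext[OF tt] by (simp only: cassoc)
  qed
  also have "\<dots> = Lu U \<circ>\<circ> (Id U \<box> e) \<circ>\<circ> (w \<box> (Id b \<box> Id a)) \<circ>\<circ> As (X \<odot> a) b a \<circ>\<circ> ((As X a b)\<^sup>\<star> \<box> Id a)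
      \<circ>\<circ> ((Id X \<box> c) \<box> Id a) \<circ>\<circ> ((Ru X)\<^sup>\<star> \<box> Id a)"
    using o e c w ext[OF nat_As_a[of w "Id b" "Id a" "X \<odot> a" b a U b a]] by (simp only: G cassoc)
  also have "\<dots> = Lu U \<circ>\<circ> (w \<box> Id U) \<circ>\<circ> (Id (X \<odot> a) \<box> e) \<circ>\<circ> As (X \<odot> a) b a \<circ>\<circ> ((As X a b)\<^sup>\<star> \<box> Id a)
      \<circ>\<circ> ((Id X \<box> c) \<box> Id a) \<circ>\<circ> ((Ru X)\<^sup>\<star> \<box> Id a)"
  proof -
    have "(Id U \<box> e) \<circ>\<circ> (w \<box> (Id b \<box> Id a)) = (Id U \<circ>\<circ> w) \<box> (e \<circ>\<circ> Id (b \<odot> a))"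
      using o e w by (simp add: tens_Id interchange)
    also have "\<dots> = (w \<circ>\<circ> Id (X \<odot> a)) \<box> (Id U \<circ>\<circ> e)" using o e w by (simp add: aidl aidr)
    also have "\<dots> = (w \<box> Id U) \<circ>\<circ> (Id (X \<odot> a) \<box> e)" using o e w by (simp add: interchange)
    finally have tt: "(Id U \<box> e) \<circ>\<circ> (w \<box> (Id b \<box> Id a)) = (w \<box> Id U) \<circ>\<circ> (Id (X \<odot> a) \<box> e)" .
    show ?thesis using ext[OF tt] by (simp only: cassoc)
  qed
  also have "\<dots> = w \<circ>\<circ> (Id X \<box> Ru a) \<circ>\<circ> As X a U \<circ>\<circ> ((Id X \<box> Id a) \<box> e) \<circ>\<circ> As (X \<odot> a) b a \<circ>\<circ> ((As X a b)\<^sup>\<star> \<box> Id a)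
      \<circ>\<circ> ((Id X \<box> c) \<box> Id a) \<circ>\<circ> ((Ru X)\<^sup>\<star> \<box> Id a)"
  proof -
    have tt: "Lu U \<circ>\<circ> (w \<box> Id U) = w \<circ>\<circ> (Id X \<box> Ru a) \<circ>\<circ> As X a U"
      using K3 K2[of X a] nat_Ru_a[of w "X \<odot> a" U] o w by simp
    show ?thesis using ext[OF tt] o by (simp only: cassoc tens_Id)
  qed
  also have "\<dots> = w \<circ>\<circ> (Id X \<box> Ru a) \<circ>\<circ> (Id X \<box> (Id a \<box> e)) \<circ>\<circ> As X a (b \<odot> a) \<circ>\<circ> As (X \<odot> a) b a \<circ>\<circ> ((As X a b)\<^sup>\<star> \<box> Id a)
      \<circ>\<circ> ((Id X \<box> c) \<box> Id a) \<circ>\<circ> ((Ru X)\<^sup>\<star> \<box> Id a)"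
    using o e c w ext[OF nat_As_a[of "Id X" "Id a" e X a "b \<odot> a" X a U]] by (simp only: G cassoc)
  also have "\<dots> = w \<circ>\<circ> (Id X \<box> Ru a) \<circ>\<circ> (Id X \<box> (Id a \<box> e)) \<circ>\<circ> (Id X \<box> As a b a) \<circ>\<circ> As X (a \<odot> b) a \<circ>\<circ>
      ((As X a b \<box> Id a) \<circ>\<circ> ((As X a b)\<^sup>\<star> \<box> Id a))
      \<circ>\<circ> ((Id X \<box> c) \<box> Id a) \<circ>\<circ> ((Ru X)\<^sup>\<star> \<box> Id a)"
    using o e c w ext[OF pent_a[of X a b a]] by (simp only: G cassoc)
  also have "\<dots> = w \<circ>\<circ> (Id X \<box> Ru a) \<circ>\<circ> (Id X \<box> (Id a \<box> e)) \<circ>\<circ> (Id X \<box> As a b a) \<circ>\<circ> As X (a \<odot> b) a \<circ>\<circ>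
      ((Id X \<box> c) \<box> Id a) \<circ>\<circ> ((Ru X)\<^sup>\<star> \<box> Id a)"
  proof -
    have "(As X a b \<box> Id a) \<circ>\<circ> ((As X a b)\<^sup>\<star> \<box> Id a) = Id ((X \<odot> (a \<odot> b)) \<odot> a)"
      using o by (simp add: interchange[symmetric] As_u2 aidl tens_Id)
    then show ?thesis using o c aidl by (simp)
  qed
  also have "\<dots> = w \<circ>\<circ> (Id X \<box> Ru a) \<circ>\<circ> (Id X \<box> (Id a \<box> e)) \<circ>\<circ> (Id X \<box> As a b a) \<circ>\<circ> (Id X \<box> (c \<box> Id a)) \<circ>\<circ>
      As X U a \<circ>\<circ> ((Ru X)\<^sup>\<star> \<box> Id a)"
    using o e c w ext[OF nat_As_a[of "Id X" c "Id a" X U a X "a \<odot> b" a]] by (simp only: G cassoc)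
  also have "\<dots> = w \<circ>\<circ> (Id X \<box> Ru a) \<circ>\<circ> (Id X \<box> (Id a \<box> e)) \<circ>\<circ> (Id X \<box> As a b a) \<circ>\<circ> (Id X \<box> (c \<box> Id a)) \<circ>\<circ>
      (Id X \<box> (Lu a)\<^sup>\<star>)"
    using o tri_inv[of X a] by simp
  also have "\<dots> = w \<circ>\<circ> (Id X \<box> (Ru a \<circ>\<circ> (Id a \<box> e) \<circ>\<circ> As a b a \<circ>\<circ> (c \<box> Id a) \<circ>\<circ> (Lu a)\<^sup>\<star>))"
    using o e c w by (simp add: interchange_l)
  also have "\<dots> = w" using z o w by (simp add: tens_Id aidr)
  finally show ?thesis .
qed


lemma swap:
  assumes "uni u" "uni v" "good P" "good Q" "sr u = tg P" "sr P = sr v" "sr Q = tg v" "tg Q = tg u"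
    and e: "u \<circ>\<circ> P = Q \<circ>\<circ> v"
  shows "u\<^sup>\<star> \<circ>\<circ> Q = P \<circ>\<circ> v\<^sup>\<star>"
proof -
  have g: "good u" "good v" using assms uni_def by auto
  have "u\<^sup>\<star> \<circ>\<circ> Q = u\<^sup>\<star> \<circ>\<circ> Q \<circ>\<circ> (v \<circ>\<circ> v\<^sup>\<star>)" using assms g by (simp add: uni_def aidr)
  also have "\<dots> = u\<^sup>\<star> \<circ>\<circ> (u \<circ>\<circ> P) \<circ>\<circ> v\<^sup>\<star>" using e by (simp add: cassoc)
  also have "\<dots> = (u\<^sup>\<star> \<circ>\<circ> u) \<circ>\<circ> P \<circ>\<circ> v\<^sup>\<star>" by (simp add: cassoc)
  also have "\<dots> = P \<circ>\<circ> v\<^sup>\<star>" using assms g by (simp add: uni_def aidl)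
  finally show ?thesis .
qed

lemma nat_As_inv: "good x \<Longrightarrow> good y \<Longrightarrow> good z \<Longrightarrow> sr x = a \<Longrightarrow> sr y = a' \<Longrightarrow> sr z = a'' \<Longrightarrow>
  tg x = b \<Longrightarrow> tg y = b' \<Longrightarrow> tg z = b'' \<Longrightarrow>
  (As b b' b'')\<^sup>\<star> \<circ>\<circ> (x \<box> (y \<box> z)) = ((x \<box> y) \<box> z) \<circ>\<circ> (As a a' a'')\<^sup>\<star>"
  apply (rule swap[OF _ _ _ _ _ _ _ _ nat_As_a[of x y z a a' a'' b b' b'']])
  using good_obj[of x] good_obj[of y] good_obj[of z] by (auto simp: uniI)
lemma nat_Ru_inv: "good x \<Longrightarrow> sr x = a \<Longrightarrow> tg x = b \<Longrightarrow> (Ru b)\<^sup>\<star> \<circ>\<circ> x = (x \<box> Id U) \<circ>\<circ> (Ru a)\<^sup>\<star>"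
  apply (rule swap[OF _ _ _ _ _ _ _ _ nat_Ru_a[of x a b]])
  using good_obj[of x] by (auto simp: uniI)
lemma nat_Lu_inv: "good x \<Longrightarrow> sr x = a \<Longrightarrow> tg x = b \<Longrightarrow> (Lu b)\<^sup>\<star> \<circ>\<circ> x = (Id U \<box> x) \<circ>\<circ> (Lu a)\<^sup>\<star>"
  apply (rule swap[OF _ _ _ _ _ _ _ _ nat_Lu_a[of x a b]])
  using good_obj[of x] by (auto simp: uniI)

lemma split1: "good x \<Longrightarrow> good y \<Longrightarrow> sr x = p \<Longrightarrow> tg y = s \<Longrightarrow> (x \<box> Id s) \<circ>\<circ> (Id p \<box> y) = x \<box> y"
  using good_obj[of x] good_obj[of y] by (simp add: interchange[symmetric] aidl aidr)
lemma split2: "good x \<Longrightarrow> good y \<Longrightarrow> tg x = q \<Longrightarrow> sr y = r \<Longrightarrow> (Id q \<box> y) \<circ>\<circ> (x \<box> Id r) = x \<box> y"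
  using good_obj[of x] good_obj[of y] by (simp add: interchange[symmetric] aidl aidr)

lemma good_Lm: "X \<in> OB \<Longrightarrow> a \<in> OB \<Longrightarrow> b \<in> OB \<Longrightarrow> good w \<Longrightarrow> sr w = X \<odot> a \<Longrightarrow> tg w = U \<Longrightarrow>
   good y \<Longrightarrow> sr y = U \<Longrightarrow> tg y = a \<odot> b \<Longrightarrow> good (Lm X a b w y) \<and> sr (Lm X a b w y) = X \<and> tg (Lm X a b w y) = b"
  unfolding Lm_def by simp

lemma Lm_pre:
  assumes o: "X \<in> OB" "Y \<in> OB" "a \<in> OB" "b \<in> OB"
    and z: "good z" "sr z = X" "tg z = Y"
    and w: "good w" "sr w = Y \<odot> a" "tg w = U"
    and y: "good y" "sr y = U" "tg y = a \<odot> b"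
  shows "Lm X a b (w \<circ>\<circ> (z \<box> Id a)) y = Lm Y a b w y \<circ>\<circ> z"
proof -
  have "Lm X a b (w \<circ>\<circ> (z \<box> Id a)) y = Lu b \<circ>\<circ> (w \<box> Id b) \<circ>\<circ> ((z \<box> Id a) \<box> Id b) \<circ>\<circ> (As X a b)\<^sup>\<star> \<circ>\<circ> (Id X \<box> y) \<circ>\<circ> (Ru X)\<^sup>\<star>"
    unfolding Lm_def using o z w y by (simp add: interchange_r cassoc)
  also have "\<dots> = Lu b \<circ>\<circ> (w \<box> Id b) \<circ>\<circ> (As Y a b)\<^sup>\<star> \<circ>\<circ> (z \<box> (Id a \<box> Id b)) \<circ>\<circ> (Id X \<box> y) \<circ>\<circ> (Ru X)\<^sup>\<star>"
    using o z w y ext[OF nat_As_inv[of z "Id a" "Id b" X a b Y a b, symmetric]] by (simp only: G cassoc)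
  also have "\<dots> = Lu b \<circ>\<circ> (w \<box> Id b) \<circ>\<circ> (As Y a b)\<^sup>\<star> \<circ>\<circ> (Id Y \<box> y) \<circ>\<circ> (z \<box> Id U) \<circ>\<circ> (Ru X)\<^sup>\<star>"
  proof -
    have tt: "(z \<box> (Id a \<box> Id b)) \<circ>\<circ> (Id X \<box> y) = (Id Y \<box> y) \<circ>\<circ> (z \<box> Id U)"
      using o z y by (simp add: tens_Id split1 split2)
    show ?thesis using ext[OF tt] by (simp only: cassoc)
  qed
  also have "\<dots> = Lu b \<circ>\<circ> (w \<box> Id b) \<circ>\<circ> (As Y a b)\<^sup>\<star> \<circ>\<circ> (Id Y \<box> y) \<circ>\<circ> (Ru Y)\<^sup>\<star> \<circ>\<circ> z"
    using o z nat_Ru_inv[of z X Y] by simp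
  also have "\<dots> = Lm Y a b w y \<circ>\<circ> z" unfolding Lm_def by (simp add: cassoc)
  finally show ?thesis .
qed

lemma Lm_post:
  assumes o: "X \<in> OB" "a \<in> OB" "b \<in> OB" "b' \<in> OB"
    and z: "good z" "sr z = b" "tg z = b'"
    and w: "good w" "sr w = X \<odot> a" "tg w = U"
    and y: "good y" "sr y = U" "tg y = a \<odot> b"
  shows "Lm X a b' w ((Id a \<box> z) \<circ>\<circ> y) = z \<circ>\<circ> Lm X a b w y"
proof -
  have "Lm X a b' w ((Id a \<box> z) \<circ>\<circ> y) = Lu b' \<circ>\<circ> (w \<box> Id b') \<circ>\<circ> (As X a b')\<^sup>\<star> \<circ>\<circ> (Id X \<box> (Id a \<box> z)) \<circ>\<circ> (Id X \<box> y) \<circ>\<circ> (Ru X)\<^sup>\<star>"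
    unfolding Lm_def using o z w y by (simp add: interchange_l cassoc)
  also have "\<dots> = Lu b' \<circ>\<circ> (w \<box> Id b') \<circ>\<circ> ((Id X \<box> Id a) \<box> z) \<circ>\<circ> (As X a b)\<^sup>\<star> \<circ>\<circ> (Id X \<box> y) \<circ>\<circ> (Ru X)\<^sup>\<star>"
    using o z w y ext[OF nat_As_inv[of "Id X" "Id a" z X a b X a b']] by (simp only: G cassoc)
  also have "\<dots> = Lu b' \<circ>\<circ> (Id U \<box> z) \<circ>\<circ> (w \<box> Id b) \<circ>\<circ> (As X a b)\<^sup>\<star> \<circ>\<circ> (Id X \<box> y) \<circ>\<circ> (Ru X)\<^sup>\<star>"
  proof -
    have tt: "(w \<box> Id b') \<circ>\<circ> ((Id X \<box> Id a) \<box> z) = (Id U \<box> z) \<circ>\<circ> (w \<box> Id b)"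
      using o z w by (simp add: tens_Id split1 split2)
    show ?thesis using ext[OF tt] by (simp only: cassoc)
  qed
  also have "\<dots> = z \<circ>\<circ> Lm X a b w y"
  proof -
    have tt: "Lu b' \<circ>\<circ> (Id U \<box> z) = z \<circ>\<circ> Lu b" using nat_Lu_a[of z b b'] z by simp
    show ?thesis unfolding Lm_def using ext[OF tt] by (simp only: cassoc)
  qed
  finally show ?thesis .
qed

lemma Lm_mid:
  assumes o: "X \<in> OB" "a \<in> OB" "b \<in> OB"
    and f: "good f" "sr f = a" "tg f = a"
    and w: "good w" "sr w = X \<odot> a" "tg w = U"
    and y: "good y" "sr y = U" "tg y = a \<odot> b"
  shows "Lm X a b w ((f \<box> Id b) \<circ>\<circ> y) = Lm X a b (w \<circ>\<circ> (Id X \<box> f)) y"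
proof -
  have "Lm X a b w ((f \<box> Id b) \<circ>\<circ> y) = Lu b \<circ>\<circ> (w \<box> Id b) \<circ>\<circ> (As X a b)\<^sup>\<star> \<circ>\<circ> (Id X \<box> (f \<box> Id b)) \<circ>\<circ> (Id X \<box> y) \<circ>\<circ> (Ru X)\<^sup>\<star>"
    unfolding Lm_def using o f w y by (simp add: interchange_l cassoc)
  also have "\<dots> = Lu b \<circ>\<circ> (w \<box> Id b) \<circ>\<circ> ((Id X \<box> f) \<box> Id b) \<circ>\<circ> (As X a b)\<^sup>\<star> \<circ>\<circ> (Id X \<box> y) \<circ>\<circ> (Ru X)\<^sup>\<star>"
    using o f w y ext[OF nat_As_inv[of "Id X" f "Id b" X a b X a b]] by (simp only: G cassoc)
  also have "\<dots> = Lm X a b (w \<circ>\<circ> (Id X \<box> f)) y"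
    unfolding Lm_def using o f w y by (simp add: interchange_r cassoc)
  finally show ?thesis .
qed

lemma I2:
  assumes o: "X \<in> OB" "a \<in> OB" "b \<in> OB"
    and z: "good z" "sr z = X" "tg z = b"
    and e: "good e" "sr e = b \<odot> a" "tg e = U"
    and c: "good c" "sr c = U" "tg c = a \<odot> b"
    and zz: "Lm b a b e c = Id b"
  shows "Lm X a b (e \<circ>\<circ> (z \<box> Id a)) c = z"
  using Lm_pre[of X b a b z e c] assms by (simp add: aidl)

lemma I3:
  assumes o: "a \<in> OB" "b \<in> OB"
    and T: "good T" "sr T = a" "tg T = a"
    and e: "good e" "sr e = b \<odot> a" "tg e = U"
    and c: "good c" "sr c = U" "tg c = a \<odot> b"
    and z: "Ru a \<circ>\<circ> (Id a \<box> e) \<circ>\<circ> As a b a \<circ>\<circ> (c \<box> Id a) \<circ>\<circ> (Lu a)\<^sup>\<star> = Id a"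
    and h: "e \<circ>\<circ> (Id b \<box> T) = e"
  shows "T = Id a"
proof -
  have "Id a = Ru a \<circ>\<circ> (Id a \<box> (e \<circ>\<circ> (Id b \<box> T))) \<circ>\<circ> As a b a \<circ>\<circ> (c \<box> Id a) \<circ>\<circ> (Lu a)\<^sup>\<star>"
    using z h by simp
  also have "\<dots> = Ru a \<circ>\<circ> (Id a \<box> e) \<circ>\<circ> (Id a \<box> (Id b \<box> T)) \<circ>\<circ> As a b a \<circ>\<circ> (c \<box> Id a) \<circ>\<circ> (Lu a)\<^sup>\<star>"
    using o T e c by (simp add: interchange_l cassoc)
  also have "\<dots> = Ru a \<circ>\<circ> (Id a \<box> e) \<circ>\<circ> As a b a \<circ>\<circ> ((Id a \<box> Id b) \<box> T) \<circ>\<circ> (c \<box> Id a) \<circ>\<circ> (Lu a)\<^sup>\<star>"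
    using o T e c ext[OF nat_As_a[of "Id a" "Id b" T a b a a b a, symmetric]] by (simp only: G cassoc)
  also have "\<dots> = Ru a \<circ>\<circ> (Id a \<box> e) \<circ>\<circ> As a b a \<circ>\<circ> (c \<box> Id a) \<circ>\<circ> (Id U \<box> T) \<circ>\<circ> (Lu a)\<^sup>\<star>"
  proof -
    have tt: "((Id a \<box> Id b) \<box> T) \<circ>\<circ> (c \<box> Id a) = (c \<box> Id a) \<circ>\<circ> (Id U \<box> T)"
      using o T c by (simp add: tens_Id split1 split2)
    show ?thesis using ext[OF tt] by (simp only: cassoc)
  qed
  also have "\<dots> = Ru a \<circ>\<circ> (Id a \<box> e) \<circ>\<circ> As a b a \<circ>\<circ> (c \<box> Id a) \<circ>\<circ> (Lu a)\<^sup>\<star> \<circ>\<circ> T"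
    using o T nat_Lu_inv[of T a a] by simp
  also have "\<dots> = T" using z T by (simp add: cassoc[symmetric] aidl)
  finally show ?thesis by simp
qed


lemma core:
  assumes o: "a \<in> OB" "b1 \<in> OB" "b2 \<in> OB"
    and e1: "good e1" "sr e1 = b1 \<odot> a" "tg e1 = U"
    and c1: "good c1" "sr c1 = U" "tg c1 = a \<odot> b1"
    and e2: "good e2" "sr e2 = b2 \<odot> a" "tg e2 = U"
    and c2: "good c2" "sr c2 = U" "tg c2 = a \<odot> b2"
    and z11: "Ru a \<circ>\<circ> (Id a \<box> e1) \<circ>\<circ> As a b1 a \<circ>\<circ> (c1 \<box> Id a) \<circ>\<circ> (Lu a)\<^sup>\<star> = Id a"
    and z12: "Lm b1 a b1 e1 c1 = Id b1"
    and z21: "Ru a \<circ>\<circ> (Id a \<box> e2) \<circ>\<circ> As a b2 a \<circ>\<circ> (c2 \<box> Id a) \<circ>\<circ> (Lu a)\<^sup>\<star> = Id a"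
    and z22: "Lm b2 a b2 e2 c2 = Id b2"
    and A: "good A" "sr A = a" "tg A = a" "A \<circ>\<circ> A = Id a"
    and B: "good B" "sr B = a" "tg B = a" "B \<circ>\<circ> B = Id a"
    and AB: "A \<circ>\<circ> B = B \<circ>\<circ> A"
    and r1: "Br b1 a \<circ>\<circ> e1\<^sup>\<star> = (B \<box> Id b1) \<circ>\<circ> c1"
    and r2: "Br b2 a \<circ>\<circ> e2\<^sup>\<star> = (A \<box> Id b2) \<circ>\<circ> c2"
    and H: "\<And>R g k. good R \<Longrightarrow> sr R = b1 \<Longrightarrow> tg R = b1 \<Longrightarrow> R \<circ>\<circ> R = Id b1 \<Longrightarrow>
       good g \<Longrightarrow> good k \<Longrightarrow> sr g = b1 \<Longrightarrow> tg g = b2 \<Longrightarrow> sr k = b2 \<Longrightarrow> tg k = b1 \<Longrightarrow>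
       g \<circ>\<circ> k = Id b2 \<Longrightarrow> k \<circ>\<circ> g = Id b1 \<Longrightarrow> R = g\<^sup>\<star> \<circ>\<circ> g \<Longrightarrow> R = Id b1"
  shows "A = B"
proof -
  define h where "h = Lm b2 a b1 e2 c1"
  define k where "k = Lm b1 a b2 e1 c2"
  have h: "good h" "sr h = b2" "tg h = b1" unfolding h_def using good_Lm o e2 c1 by auto
  have k: "good k" "sr k = b1" "tg k = b2" unfolding k_def using good_Lm o e1 c2 by auto
  have eh: "e1 \<circ>\<circ> (h \<box> Id a) = e2" unfolding h_def by (rule snake) (use o e1 c1 e2 z11 in auto)
  have ek: "e2 \<circ>\<circ> (k \<box> Id a) = e1" unfolding k_def by (rule snake) (use o e1 c2 e2 z21 in auto)
  have kh: "k \<circ>\<circ> h = Id b2"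
  proof -
    have "e2 \<circ>\<circ> ((k \<circ>\<circ> h) \<box> Id a) = e2"
      using o h k e2 eh ek by (simp add: interchange_r cassoc[symmetric])
    then have "k \<circ>\<circ> h = Lm b2 a b2 e2 c2" using I2[of b2 a b2 "k \<circ>\<circ> h" e2 c2] o h k e2 c2 z22 by simp
    then show ?thesis using z22 by simp
  qed
  have hk: "h \<circ>\<circ> k = Id b1"
  proof -
    have "e1 \<circ>\<circ> ((h \<circ>\<circ> k) \<box> Id a) = e1"
      using o h k e1 eh ek by (simp add: interchange_r cassoc[symmetric])
    then have "h \<circ>\<circ> k = Lm b1 a b1 e1 c1" using I2[of b1 a b1 "h \<circ>\<circ> k" e1 c1] o h k e1 c1 z12 by simp
    then show ?thesis using z12 by simp
  qed
  define T where "T = A \<circ>\<circ> B"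
  have T: "good T" "sr T = a" "tg T = a" unfolding T_def using A B by auto
  have TT: "T \<circ>\<circ> T = Id a"
  proof -
    have "T \<circ>\<circ> T = A \<circ>\<circ> (B \<circ>\<circ> A) \<circ>\<circ> B" unfolding T_def by (simp add: cassoc)
    also have "\<dots> = A \<circ>\<circ> (A \<circ>\<circ> B) \<circ>\<circ> B" using AB by simp
    also have "\<dots> = (A \<circ>\<circ> A) \<circ>\<circ> (B \<circ>\<circ> B)" by (simp add: cassoc)
    also have "\<dots> = Id a" using A B o by (simp add: aidl)
    finally show ?thesis .
  qed
  have c2r: "c2 = (Id a \<box> h\<^sup>\<star>) \<circ>\<circ> (T \<box> Id b1) \<circ>\<circ> c1"
  proof -
    have "e2\<^sup>\<star> = (h\<^sup>\<star> \<box> Id a) \<circ>\<circ> e1\<^sup>\<star>" using eh[symmetric] o by (simp add: dgr_comp dgr_tens dgr_Id)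
    then have "(A \<box> Id b2) \<circ>\<circ> c2 = Br b2 a \<circ>\<circ> (h\<^sup>\<star> \<box> Id a) \<circ>\<circ> e1\<^sup>\<star>" using r2 by simp
    also have "\<dots> = (Id a \<box> h\<^sup>\<star>) \<circ>\<circ> Br b1 a \<circ>\<circ> e1\<^sup>\<star>"
      using o h e1 ext[OF nat_Br_a[of "h\<^sup>\<star>" "Id a" b1 b2 a a]] by (simp only: G cassoc)
    also have "\<dots> = (Id a \<box> h\<^sup>\<star>) \<circ>\<circ> (B \<box> Id b1) \<circ>\<circ> c1" using r1 by simp
    finally have x: "(A \<box> Id b2) \<circ>\<circ> c2 = (Id a \<box> h\<^sup>\<star>) \<circ>\<circ> (B \<box> Id b1) \<circ>\<circ> c1" .
    have "c2 = (A \<box> Id b2) \<circ>\<circ> (A \<box> Id b2) \<circ>\<circ> c2" using o A c2 by (simp add: cassoc[symmetric] interchange[symmetric] aidl tens_Id)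
    also have "\<dots> = (A \<box> Id b2) \<circ>\<circ> (Id a \<box> h\<^sup>\<star>) \<circ>\<circ> (B \<box> Id b1) \<circ>\<circ> c1" using x by simp
    also have "\<dots> = (Id a \<box> h\<^sup>\<star>) \<circ>\<circ> (A \<box> Id b1) \<circ>\<circ> (B \<box> Id b1) \<circ>\<circ> c1"
    proof -
      have tt: "(A \<box> Id b2) \<circ>\<circ> (Id a \<box> h\<^sup>\<star>) = (Id a \<box> h\<^sup>\<star>) \<circ>\<circ> (A \<box> Id b1)" using o A h by (simp add: split1 split2)
      show ?thesis using ext[OF tt] by (simp only: cassoc)
    qed
    also have "\<dots> = (Id a \<box> h\<^sup>\<star>) \<circ>\<circ> (T \<box> Id b1) \<circ>\<circ> c1" unfolding T_def using o A B by (simp add: interchange_r cassoc)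
    finally show ?thesis .
  qed
  define R where "R = Lm b1 a b1 (e1 \<circ>\<circ> (Id b1 \<box> T)) c1"
  have R: "good R" "sr R = b1" "tg R = b1" unfolding R_def using good_Lm o e1 c1 T by auto
  have hRh: "h\<^sup>\<star> \<circ>\<circ> R \<circ>\<circ> h = Id b2"
  proof -
    have "Id b2 = Lm b2 a b2 (e1 \<circ>\<circ> (h \<box> Id a)) ((Id a \<box> h\<^sup>\<star>) \<circ>\<circ> ((T \<box> Id b1) \<circ>\<circ> c1))"
      using z22 eh c2r by simp
    also have "\<dots> = Lm b1 a b2 e1 ((Id a \<box> h\<^sup>\<star>) \<circ>\<circ> ((T \<box> Id b1) \<circ>\<circ> c1)) \<circ>\<circ> h"
      by (rule Lm_pre) (use o h e1 T c1 in auto)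
    also have "\<dots> = h\<^sup>\<star> \<circ>\<circ> Lm b1 a b1 e1 ((T \<box> Id b1) \<circ>\<circ> c1) \<circ>\<circ> h"
      using Lm_post[of b1 a b1 b2 "h\<^sup>\<star>" e1 "(T \<box> Id b1) \<circ>\<circ> c1"] o h e1 T c1 by (simp add: cassoc)
    also have "\<dots> = h\<^sup>\<star> \<circ>\<circ> R \<circ>\<circ> h"
      unfolding R_def using Lm_mid[of b1 a b1 T e1 c1] o T e1 c1 by simp
    finally show ?thesis by simp
  qed
  have eR: "e1 \<circ>\<circ> (R \<box> Id a) = e1 \<circ>\<circ> (Id b1 \<box> T)" unfolding R_def by (rule snake) (use o e1 c1 T z11 in auto)
  have RR: "R \<circ>\<circ> R = Id b1"
  proof -
    have "e1 \<circ>\<circ> ((R \<circ>\<circ> R) \<box> Id a) = e1 \<circ>\<circ> (R \<box> Id a) \<circ>\<circ> (R \<box> Id a)" using o R by (simp add: interchange_r cassoc)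
    also have "\<dots> = e1 \<circ>\<circ> (Id b1 \<box> T) \<circ>\<circ> (R \<box> Id a)" using eR by (simp add: cassoc[symmetric])
    also have "\<dots> = e1 \<circ>\<circ> (R \<box> Id a) \<circ>\<circ> (Id b1 \<box> T)" using o R T by (simp add: split1 split2)
    also have "\<dots> = e1 \<circ>\<circ> (Id b1 \<box> T) \<circ>\<circ> (Id b1 \<box> T)" using eR by (simp add: cassoc[symmetric])
    also have "\<dots> = e1" using o T e1 TT by (simp add: interchange_l[symmetric] tens_Id aidr)
    finally have "e1 \<circ>\<circ> ((R \<circ>\<circ> R) \<box> Id a) = e1" .
    then have "R \<circ>\<circ> R = Lm b1 a b1 e1 c1" using I2[of b1 a b1 "R \<circ>\<circ> R" e1 c1] o R e1 c1 z12 by simp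
    then show ?thesis using z12 by simp
  qed
  have QR: "(h \<circ>\<circ> h\<^sup>\<star>) \<circ>\<circ> R = Id b1"
  proof -
    have "(h \<circ>\<circ> h\<^sup>\<star>) \<circ>\<circ> R = (h \<circ>\<circ> h\<^sup>\<star>) \<circ>\<circ> R \<circ>\<circ> (h \<circ>\<circ> k)" using hk o h R by (simp add: aidr)
    also have "\<dots> = h \<circ>\<circ> (h\<^sup>\<star> \<circ>\<circ> R \<circ>\<circ> h) \<circ>\<circ> k" by (simp add: cassoc)
    also have "\<dots> = Id b1" using hRh hk h k o by (simp add: aidl)
    finally show ?thesis .
  qed
  have RQ: "R = (h\<^sup>\<star>)\<^sup>\<star> \<circ>\<circ> h\<^sup>\<star>"
  proof -
    have "h \<circ>\<circ> h\<^sup>\<star> = (h \<circ>\<circ> h\<^sup>\<star>) \<circ>\<circ> (R \<circ>\<circ> R)" using RR h o by (simp add: aidr)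
    also have "\<dots> = R" using QR R by (simp add: cassoc[symmetric] aidl)
    finally show ?thesis using h by (simp add: dgr_dgr)
  qed
  have "R = Id b1"
  proof (rule H[OF R RR, of "h\<^sup>\<star>" "k\<^sup>\<star>"])
    show "h\<^sup>\<star> \<circ>\<circ> k\<^sup>\<star> = Id b2" using kh o by (simp add: dgr_comp[symmetric] dgr_Id)
    show "k\<^sup>\<star> \<circ>\<circ> h\<^sup>\<star> = Id b1" using hk o by (simp add: dgr_comp[symmetric] dgr_Id)
  qed (use h k RQ in auto)
  then have "e1 \<circ>\<circ> (Id b1 \<box> T) = e1" using eR o e1 by (simp add: tens_Id aidr)
  then have "T = Id a" using I3[of a b1 T e1 c1] o T e1 c1 z11 by blast
  then have TI: "A \<circ>\<circ> B = Id a" unfolding T_def .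
  have "A = A \<circ>\<circ> (B \<circ>\<circ> B)" using A B by (simp add: aidr)
  also have "\<dots> = (A \<circ>\<circ> B) \<circ>\<circ> B" by (simp add: cassoc)
  also have "\<dots> = B" using TI B by (simp add: aidl)
  finally show ?thesis .
qed


lemma ucan: "uni u \<Longrightarrow> good X \<Longrightarrow> tg X = tg u \<Longrightarrow> u \<circ>\<circ> u\<^sup>\<star> \<circ>\<circ> X = X"
  unfolding uni_def by (simp add: cassoc[symmetric] aidl)
lemma ucan_l: "uni u \<Longrightarrow> c \<in> OB \<Longrightarrow> good X \<Longrightarrow> tg X = c \<odot> tg u \<Longrightarrow> (Id c \<box> u) \<circ>\<circ> (Id c \<box> u\<^sup>\<star>) \<circ>\<circ> X = X"
  using ucan[of "Id c \<box> u" X] uni_good[of u] good_obj[of u] by (auto simp: uniI dgr_tens dgr_Id)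
lemma ucan_r: "uni u \<Longrightarrow> c \<in> OB \<Longrightarrow> good X \<Longrightarrow> tg X = tg u \<odot> c \<Longrightarrow> (u \<box> Id c) \<circ>\<circ> (u\<^sup>\<star> \<box> Id c) \<circ>\<circ> X = X"
  using ucan[of "u \<box> Id c" X] uni_good[of u] good_obj[of u] by (auto simp: uniI dgr_tens dgr_Id)

end

locale mfun = C1: smc D1 + C2: smc D2
  for D1 :: "('o, 'm, 'x) dcat_scheme" and D2 :: "('p, 'n, 'y) dcat_scheme" +
  fixes Fo :: "'o \<Rightarrow> 'p" and Fm :: "'m \<Rightarrow> 'n" and mu :: "'o \<Rightarrow> 'o \<Rightarrow> 'n" and eps :: 'n
  assumes F: "is_sym_monoidal_dagger_functor D1 D2 Fo Fm mu eps"
begin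

abbreviation cc (infixr "\<diamond>" 55) where "x \<diamond> y \<equiv> C2.comp x y"
abbreviation tt (infixr "\<oslash>" 60) where "x \<oslash> y \<equiv> C2.tens x y"
abbreviation dd ("_\<^sup>\<ddagger>" [1000] 999) where "x\<^sup>\<ddagger> \<equiv> C2.dgr x"
abbreviation o1 (infixr "\<odot>\<^sub>1" 60) where "a \<odot>\<^sub>1 b \<equiv> tno D1 a b"
abbreviation o2 (infixr "\<odot>\<^sub>2" 60) where "a \<odot>\<^sub>2 b \<equiv> tno D2 a b"
abbreviation U1 where "U1 \<equiv> unt D1"
abbreviation U2 where "U2 \<equiv> unt D2"

lemmas FD = F[unfolded is_sym_monoidal_dagger_functor_def]

lemma F_obj'[rule_format]: "\<forall>a \<in> Obj D1. Fo a \<in> Obj D2" using FD by (elim conjE) assumption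
lemma F_hom'[rule_format]: "\<forall>a b f. f \<in> Hom D1 a b \<longrightarrow> Fm f \<in> Hom D2 (Fo a) (Fo b)" using FD by (elim conjE) assumption
lemma F_cmp'[rule_format]: "\<forall>a b c f g. f \<in> Hom D1 a b \<longrightarrow> g \<in> Hom D1 b c \<longrightarrow>
        Fm (cmp D1 g f) = cmp D2 (Fm g) (Fm f)" using FD by (elim conjE) assumption
lemma F_id'[rule_format]: "\<forall>a \<in> Obj D1. Fm (idm D1 a) = idm D2 (Fo a)" using FD by (elim conjE) assumption
lemma F_dag'[rule_format]: "\<forall>a b f. f \<in> Hom D1 a b \<longrightarrow> Fm (dag D1 f) = dag D2 (Fm f)" using FD by (elim conjE) assumption
lemma F_mu'[rule_format]: "\<forall>a \<in> Obj D1. \<forall>b \<in> Obj D1. unitary D2 (mu a b) (tno D2 (Fo a) (Fo b)) (Fo (tno D1 a b))" using FD by (elim conjE) assumption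
lemma F_eps': "unitary D2 eps (unt D2) (Fo (unt D1))" using FD by (elim conjE) assumption
lemma F_nat'[rule_format]: "\<forall>a b c d f g. f \<in> Hom D1 a b \<longrightarrow> g \<in> Hom D1 c d \<longrightarrow>
        cmp D2 (mu b d) (tnm D2 (Fm f) (Fm g)) = cmp D2 (Fm (tnm D1 f g)) (mu a c)" using FD by (elim conjE) assumption
lemma F_asc'[rule_format]: "\<forall>a \<in> Obj D1. \<forall>b \<in> Obj D1. \<forall>c \<in> Obj D1.
        cmp D2 (Fm (asc D1 a b c)) (cmp D2 (mu (tno D1 a b) c) (tnm D2 (mu a b) (idm D2 (Fo c)))) =
        cmp D2 (mu a (tno D1 b c)) (cmp D2 (tnm D2 (idm D2 (Fo a)) (mu b c))
                                       (asc D2 (Fo a) (Fo b) (Fo c)))" using FD by (elim conjE) assumption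
lemma F_lun'[rule_format]: "\<forall>a \<in> Obj D1. lun D2 (Fo a) =
        cmp D2 (Fm (lun D1 a)) (cmp D2 (mu (unt D1) a) (tnm D2 eps (idm D2 (Fo a))))" using FD by (elim conjE) assumption
lemma F_run'[rule_format]: "\<forall>a \<in> Obj D1. run D2 (Fo a) =
        cmp D2 (Fm (run D1 a)) (cmp D2 (mu a (unt D1)) (tnm D2 (idm D2 (Fo a)) eps))" using FD by (elim conjE) assumption
lemma F_brd'[rule_format]: "\<forall>a \<in> Obj D1. \<forall>b \<in> Obj D1.
        cmp D2 (Fm (brd D1 a b)) (mu a b) = cmp D2 (mu b a) (brd D2 (Fo a) (Fo b))" using FD by (elim conjE) assumption

definition FA where "FA a f b = C2.Ar (Fo a) (Fm f) (Fo b)"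
definition M where "M a b = C2.Ar (Fo a \<odot>\<^sub>2 Fo b) (mu a b) (Fo (a \<odot>\<^sub>1 b))"
definition E where "E = C2.Ar U2 eps (Fo U1)"

lemma F_obj[simp]: "a \<in> Obj D1 \<Longrightarrow> Fo a \<in> Obj D2" by (rule F_obj')
lemma mu_ty: "a \<in> Obj D1 \<Longrightarrow> b \<in> Obj D1 \<Longrightarrow> mu a b \<in> Hom D2 (Fo a \<odot>\<^sub>2 Fo b) (Fo (a \<odot>\<^sub>1 b))"
  using F_mu'[of a b] unfolding unitary_def by blast
lemma eps_ty: "eps \<in> Hom D2 U2 (Fo U1)" using F_eps' unfolding unitary_def by blast

lemma good_FA[simp]: "f \<in> Hom D1 a b \<Longrightarrow> C2.good (FA a f b)" unfolding FA_def using F_hom' by simp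
lemma sr_FA[simp]: "f \<in> Hom D1 a b \<Longrightarrow> sr (FA a f b) = Fo a" unfolding FA_def using F_hom' by simp
lemma tg_FA[simp]: "f \<in> Hom D1 a b \<Longrightarrow> tg (FA a f b) = Fo b" unfolding FA_def using F_hom' by simp
lemma mr_FA[simp]: "f \<in> Hom D1 a b \<Longrightarrow> mr (FA a f b) = Fm f" unfolding FA_def using F_hom' by simp
lemma good_M[simp]: "a \<in> Obj D1 \<Longrightarrow> b \<in> Obj D1 \<Longrightarrow> C2.good (M a b)" unfolding M_def using mu_ty by simp
lemma sr_M[simp]: "a \<in> Obj D1 \<Longrightarrow> b \<in> Obj D1 \<Longrightarrow> sr (M a b) = Fo a \<odot>\<^sub>2 Fo b" unfolding M_def using mu_ty by simp
lemma tg_M[simp]: "a \<in> Obj D1 \<Longrightarrow> b \<in> Obj D1 \<Longrightarrow> tg (M a b) = Fo (a \<odot>\<^sub>1 b)" unfolding M_def using mu_ty by simp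
lemma mr_M[simp]: "a \<in> Obj D1 \<Longrightarrow> b \<in> Obj D1 \<Longrightarrow> mr (M a b) = mu a b" unfolding M_def using mu_ty by simp
lemma good_E[simp]: "C2.good E" unfolding E_def using eps_ty by simp
lemma sr_E[simp]: "sr E = U2" unfolding E_def using eps_ty by simp
lemma tg_E[simp]: "tg E = Fo U1" unfolding E_def using eps_ty by simp
lemma mr_E[simp]: "mr E = eps" unfolding E_def using eps_ty by simp

lemma uni_M: "a \<in> Obj D1 \<Longrightarrow> b \<in> Obj D1 \<Longrightarrow> C2.uni (M a b)"
  unfolding C2.uni_def apply (intro conjI)
    apply simp
   apply (rule C2.arr_eqI) using F_mu'[of a b] unfolding unitary_def apply (simp_all add: C2.mr_comp C2.mr_dgr)
  apply (rule C2.arr_eqI) apply (simp_all add: C2.mr_comp C2.mr_dgr)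
  done
lemma uni_E: "C2.uni E"
  unfolding C2.uni_def apply (intro conjI)
    apply simp
   apply (rule C2.arr_eqI) using F_eps' unfolding unitary_def apply (simp_all add: C2.mr_comp C2.mr_dgr)
  apply (rule C2.arr_eqI) apply (simp_all add: C2.mr_comp C2.mr_dgr)
  done


lemmas ty1 = C1.ty_id C1.ty_cmp C1.ty_dag C1.ty_tn C1.ty_asc C1.ty_lun C1.ty_run C1.ty_brd C1.ty_U C1.ty_tob
lemmas ty2 = C2.ty_id C2.ty_cmp C2.ty_dag C2.ty_tn C2.ty_asc C2.ty_lun C2.ty_run C2.ty_brd C2.ty_U C2.ty_tob
lemmas mrs = C2.mr_comp C2.mr_tens C2.mr_dgr

lemma FA_cmp: "f \<in> Hom D1 a b \<Longrightarrow> g \<in> Hom D1 b c \<Longrightarrow> FA a (cmp D1 g f) c = FA b g c \<diamond> FA a f b"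
  apply (rule C2.arr_eqI) using C1.ty_cmp[of f a b g c] apply (simp_all add: mrs)
  using F_cmp' by blast
lemma FA_id: "a \<in> Obj D1 \<Longrightarrow> FA a (idm D1 a) a = C2.Id (Fo a)"
  apply (rule C2.arr_eqI) using C1.ty_id[of a] apply (simp_all add: mrs)
  using F_id' by blast
lemma FA_dag: "f \<in> Hom D1 a b \<Longrightarrow> FA b (dag D1 f) a = (FA a f b)\<^sup>\<ddagger>"
  apply (rule C2.arr_eqI) using C1.ty_dag[of f a b] apply (simp_all add: mrs)
  using F_dag' by blast
lemma M_nat: "f \<in> Hom D1 a b \<Longrightarrow> g \<in> Hom D1 c d \<Longrightarrow>
   M b d \<diamond> (FA a f b \<oslash> FA c g d) = FA (a \<odot>\<^sub>1 c) (tnm D1 f g) (b \<odot>\<^sub>1 d) \<diamond> M a c"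
  apply (rule C2.arr_eqI) using C1.ty_tn[of f a b g c d] C1.hom_obj[of f a b] C1.hom_obj[of g c d]
    apply (simp_all add: mrs)
  using F_nat' by blast
lemma M_asc: "a \<in> Obj D1 \<Longrightarrow> b \<in> Obj D1 \<Longrightarrow> c \<in> Obj D1 \<Longrightarrow>
  FA ((a \<odot>\<^sub>1 b) \<odot>\<^sub>1 c) (asc D1 a b c) (a \<odot>\<^sub>1 (b \<odot>\<^sub>1 c)) \<diamond> M (a \<odot>\<^sub>1 b) c \<diamond> (M a b \<oslash> C2.Id (Fo c))
   = M a (b \<odot>\<^sub>1 c) \<diamond> (C2.Id (Fo a) \<oslash> M b c) \<diamond> C2.As (Fo a) (Fo b) (Fo c)"
  apply (rule C2.arr_eqI) using C1.ty_asc[of a b c] apply (simp_all add: mrs)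
  using F_asc' by blast
lemma M_lun: "a \<in> Obj D1 \<Longrightarrow> C2.Lu (Fo a) = FA (U1 \<odot>\<^sub>1 a) (lun D1 a) a \<diamond> M U1 a \<diamond> (E \<oslash> C2.Id (Fo a))"
  apply (rule C2.arr_eqI) using C1.ty_lun[of a] apply (simp_all add: mrs)
  using F_lun' by blast
lemma M_run: "a \<in> Obj D1 \<Longrightarrow> C2.Ru (Fo a) = FA (a \<odot>\<^sub>1 U1) (run D1 a) a \<diamond> M a U1 \<diamond> (C2.Id (Fo a) \<oslash> E)"
  apply (rule C2.arr_eqI) using C1.ty_run[of a] apply (simp_all add: mrs)
  using F_run' by blast
lemma M_brd: "a \<in> Obj D1 \<Longrightarrow> b \<in> Obj D1 \<Longrightarrow>
   FA (a \<odot>\<^sub>1 b) (brd D1 a b) (b \<odot>\<^sub>1 a) \<diamond> M a b = M b a \<diamond> C2.Br (Fo a) (Fo b)"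
  apply (rule C2.arr_eqI) using C1.ty_brd[of a b] apply (simp_all add: mrs)
  using F_brd' by blast


lemma img_z1:
  assumes x: "x \<in> Obj D1" and xs: "xs \<in> Obj D1"
    and ev: "ev \<in> Hom D1 (xs \<odot>\<^sub>1 x) U1" and coev: "coev \<in> Hom D1 U1 (x \<odot>\<^sub>1 xs)"
    and z: "cmp D1 (run D1 x) (cmp D1 (tnm D1 (idm D1 x) ev) (cmp D1 (asc D1 x xs x)
        (cmp D1 (tnm D1 coev (idm D1 x)) (dag D1 (lun D1 x))))) = idm D1 x"
  shows "C2.Ru (Fo x) \<diamond> (C2.Id (Fo x) \<oslash> (E\<^sup>\<ddagger> \<diamond> FA (xs \<odot>\<^sub>1 x) ev U1 \<diamond> M xs x)) \<diamond> C2.As (Fo x) (Fo xs) (Fo x)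
     \<diamond> (((M x xs)\<^sup>\<ddagger> \<diamond> FA U1 coev (x \<odot>\<^sub>1 xs) \<diamond> E) \<oslash> C2.Id (Fo x)) \<diamond> (C2.Lu (Fo x))\<^sup>\<ddagger> = C2.Id (Fo x)"
proof -
  let ?a = "Fo x" and ?b = "Fo xs"
  have o: "?a \<in> Obj D2" "?b \<in> Obj D2" "U1 \<in> Obj D1" "U2 \<in> Obj D2" "Fo U1 \<in> Obj D2" using x xs by auto
  have t: "idm D1 x \<in> Hom D1 x x" "run D1 x \<in> Hom D1 (x \<odot>\<^sub>1 U1) x" "lun D1 x \<in> Hom D1 (U1 \<odot>\<^sub>1 x) x"
     "asc D1 x xs x \<in> Hom D1 ((x \<odot>\<^sub>1 xs) \<odot>\<^sub>1 x) (x \<odot>\<^sub>1 (xs \<odot>\<^sub>1 x))"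
     "tnm D1 (idm D1 x) ev \<in> Hom D1 (x \<odot>\<^sub>1 (xs \<odot>\<^sub>1 x)) (x \<odot>\<^sub>1 U1)"
     "tnm D1 coev (idm D1 x) \<in> Hom D1 (U1 \<odot>\<^sub>1 x) ((x \<odot>\<^sub>1 xs) \<odot>\<^sub>1 x)"
     "dag D1 (lun D1 x) \<in> Hom D1 x (U1 \<odot>\<^sub>1 x)"
    using x xs ev coev by (auto intro: ty1)
  have "C2.Ru ?a \<diamond> (C2.Id ?a \<oslash> (E\<^sup>\<ddagger> \<diamond> FA (xs \<odot>\<^sub>1 x) ev U1 \<diamond> M xs x)) \<diamond> C2.As ?a ?b ?a
     \<diamond> (((M x xs)\<^sup>\<ddagger> \<diamond> FA U1 coev (x \<odot>\<^sub>1 xs) \<diamond> E) \<oslash> C2.Id ?a) \<diamond> (C2.Lu ?a)\<^sup>\<ddagger>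
    = FA (x \<odot>\<^sub>1 U1) (run D1 x) x \<diamond> M x U1 \<diamond> (C2.Id ?a \<oslash> E) \<diamond> (C2.Id ?a \<oslash> E\<^sup>\<ddagger>) \<diamond> (C2.Id ?a \<oslash> FA (xs \<odot>\<^sub>1 x) ev U1)
     \<diamond> (C2.Id ?a \<oslash> M xs x) \<diamond> C2.As ?a ?b ?a \<diamond> ((M x xs)\<^sup>\<ddagger> \<oslash> C2.Id ?a) \<diamond> (FA U1 coev (x \<odot>\<^sub>1 xs) \<oslash> C2.Id ?a)
     \<diamond> (E \<oslash> C2.Id ?a) \<diamond> (E\<^sup>\<ddagger> \<oslash> C2.Id ?a) \<diamond> (M U1 x)\<^sup>\<ddagger> \<diamond> (FA (U1 \<odot>\<^sub>1 x) (lun D1 x) x)\<^sup>\<ddagger>"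
    using x xs ev coev t o by (simp add: M_run M_lun C2.dgr_comp C2.dgr_tens C2.dgr_Id C2.interchange_l C2.interchange_r C2.cassoc)
  also have "\<dots> = FA (x \<odot>\<^sub>1 U1) (run D1 x) x \<diamond> M x U1 \<diamond> (C2.Id ?a \<oslash> FA (xs \<odot>\<^sub>1 x) ev U1)
     \<diamond> (C2.Id ?a \<oslash> M xs x) \<diamond> C2.As ?a ?b ?a \<diamond> ((M x xs)\<^sup>\<ddagger> \<oslash> C2.Id ?a) \<diamond> (FA U1 coev (x \<odot>\<^sub>1 xs) \<oslash> C2.Id ?a)
     \<diamond> (M U1 x)\<^sup>\<ddagger> \<diamond> (FA (U1 \<odot>\<^sub>1 x) (lun D1 x) x)\<^sup>\<ddagger>"
    using x xs ev coev t o uni_E by (simp add: C2.ucan_l C2.ucan_r)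
  also have "\<dots> = FA (x \<odot>\<^sub>1 U1) (run D1 x) x \<diamond> FA (x \<odot>\<^sub>1 (xs \<odot>\<^sub>1 x)) (tnm D1 (idm D1 x) ev) (x \<odot>\<^sub>1 U1) \<diamond> M x (xs \<odot>\<^sub>1 x)
     \<diamond> (C2.Id ?a \<oslash> M xs x) \<diamond> C2.As ?a ?b ?a \<diamond> ((M x xs)\<^sup>\<ddagger> \<oslash> C2.Id ?a) \<diamond> (FA U1 coev (x \<odot>\<^sub>1 xs) \<oslash> C2.Id ?a)
     \<diamond> (M U1 x)\<^sup>\<ddagger> \<diamond> (FA (U1 \<odot>\<^sub>1 x) (lun D1 x) x)\<^sup>\<ddagger>"
  proof -
    have tt: "M x U1 \<diamond> (C2.Id ?a \<oslash> FA (xs \<odot>\<^sub>1 x) ev U1) = FA (x \<odot>\<^sub>1 (xs \<odot>\<^sub>1 x)) (tnm D1 (idm D1 x) ev) (x \<odot>\<^sub>1 U1) \<diamond> M x (xs \<odot>\<^sub>1 x)"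
      using M_nat[of "idm D1 x" x x ev "xs \<odot>\<^sub>1 x" U1] x ev t by (simp add: FA_id)
    show ?thesis using C2.ext[OF tt] by (simp only: C2.cassoc)
  qed
  also have "\<dots> = FA (x \<odot>\<^sub>1 U1) (run D1 x) x \<diamond> FA (x \<odot>\<^sub>1 (xs \<odot>\<^sub>1 x)) (tnm D1 (idm D1 x) ev) (x \<odot>\<^sub>1 U1)
     \<diamond> FA ((x \<odot>\<^sub>1 xs) \<odot>\<^sub>1 x) (asc D1 x xs x) (x \<odot>\<^sub>1 (xs \<odot>\<^sub>1 x)) \<diamond> M (x \<odot>\<^sub>1 xs) x \<diamond> (M x xs \<oslash> C2.Id ?a)
     \<diamond> ((M x xs)\<^sup>\<ddagger> \<oslash> C2.Id ?a) \<diamond> (FA U1 coev (x \<odot>\<^sub>1 xs) \<oslash> C2.Id ?a)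
     \<diamond> (M U1 x)\<^sup>\<ddagger> \<diamond> (FA (U1 \<odot>\<^sub>1 x) (lun D1 x) x)\<^sup>\<ddagger>"
    using C2.ext3[OF M_asc[of x xs x, symmetric]] x xs by (simp only: C2.cassoc)
  also have "\<dots> = FA (x \<odot>\<^sub>1 U1) (run D1 x) x \<diamond> FA (x \<odot>\<^sub>1 (xs \<odot>\<^sub>1 x)) (tnm D1 (idm D1 x) ev) (x \<odot>\<^sub>1 U1)
     \<diamond> FA ((x \<odot>\<^sub>1 xs) \<odot>\<^sub>1 x) (asc D1 x xs x) (x \<odot>\<^sub>1 (xs \<odot>\<^sub>1 x)) \<diamond> M (x \<odot>\<^sub>1 xs) x
     \<diamond> (FA U1 coev (x \<odot>\<^sub>1 xs) \<oslash> C2.Id ?a)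
     \<diamond> (M U1 x)\<^sup>\<ddagger> \<diamond> (FA (U1 \<odot>\<^sub>1 x) (lun D1 x) x)\<^sup>\<ddagger>"
    using x xs ev coev t o uni_M by (simp add: C2.ucan_r)
  also have "\<dots> = FA (x \<odot>\<^sub>1 U1) (run D1 x) x \<diamond> FA (x \<odot>\<^sub>1 (xs \<odot>\<^sub>1 x)) (tnm D1 (idm D1 x) ev) (x \<odot>\<^sub>1 U1)
     \<diamond> FA ((x \<odot>\<^sub>1 xs) \<odot>\<^sub>1 x) (asc D1 x xs x) (x \<odot>\<^sub>1 (xs \<odot>\<^sub>1 x))
     \<diamond> FA (U1 \<odot>\<^sub>1 x) (tnm D1 coev (idm D1 x)) ((x \<odot>\<^sub>1 xs) \<odot>\<^sub>1 x) \<diamond> M U1 x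
     \<diamond> (M U1 x)\<^sup>\<ddagger> \<diamond> (FA (U1 \<odot>\<^sub>1 x) (lun D1 x) x)\<^sup>\<ddagger>"
  proof -
    have tt: "M (x \<odot>\<^sub>1 xs) x \<diamond> (FA U1 coev (x \<odot>\<^sub>1 xs) \<oslash> C2.Id ?a) = FA (U1 \<odot>\<^sub>1 x) (tnm D1 coev (idm D1 x)) ((x \<odot>\<^sub>1 xs) \<odot>\<^sub>1 x) \<diamond> M U1 x"
      using M_nat[of coev U1 "x \<odot>\<^sub>1 xs" "idm D1 x" x x] x coev t by (simp add: FA_id)
    show ?thesis using C2.ext[OF tt] by (simp only: C2.cassoc)
  qed
  also have "\<dots> = FA (x \<odot>\<^sub>1 U1) (run D1 x) x \<diamond> FA (x \<odot>\<^sub>1 (xs \<odot>\<^sub>1 x)) (tnm D1 (idm D1 x) ev) (x \<odot>\<^sub>1 U1)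
     \<diamond> FA ((x \<odot>\<^sub>1 xs) \<odot>\<^sub>1 x) (asc D1 x xs x) (x \<odot>\<^sub>1 (xs \<odot>\<^sub>1 x))
     \<diamond> FA (U1 \<odot>\<^sub>1 x) (tnm D1 coev (idm D1 x)) ((x \<odot>\<^sub>1 xs) \<odot>\<^sub>1 x) \<diamond> FA x (dag D1 (lun D1 x)) (U1 \<odot>\<^sub>1 x)"
    using x xs ev coev t o uni_M by (simp add: C2.ucan FA_dag)
  also have "\<dots> = FA x (idm D1 x) x"
  proof -
    have s: "cmp D1 (tnm D1 coev (idm D1 x)) (dag D1 (lun D1 x)) \<in> Hom D1 x ((x \<odot>\<^sub>1 xs) \<odot>\<^sub>1 x)"
       "cmp D1 (asc D1 x xs x) (cmp D1 (tnm D1 coev (idm D1 x)) (dag D1 (lun D1 x))) \<in> Hom D1 x (x \<odot>\<^sub>1 (xs \<odot>\<^sub>1 x))"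
       "cmp D1 (tnm D1 (idm D1 x) ev) (cmp D1 (asc D1 x xs x) (cmp D1 (tnm D1 coev (idm D1 x)) (dag D1 (lun D1 x)))) \<in> Hom D1 x (x \<odot>\<^sub>1 U1)"
      using t by (auto intro: ty1)
    have "FA x (idm D1 x) x = FA x (cmp D1 (run D1 x) (cmp D1 (tnm D1 (idm D1 x) ev) (cmp D1 (asc D1 x xs x)
        (cmp D1 (tnm D1 coev (idm D1 x)) (dag D1 (lun D1 x)))))) x" using z by simp
    also have "\<dots> = FA (x \<odot>\<^sub>1 U1) (run D1 x) x \<diamond> FA (x \<odot>\<^sub>1 (xs \<odot>\<^sub>1 x)) (tnm D1 (idm D1 x) ev) (x \<odot>\<^sub>1 U1)
     \<diamond> FA ((x \<odot>\<^sub>1 xs) \<odot>\<^sub>1 x) (asc D1 x xs x) (x \<odot>\<^sub>1 (xs \<odot>\<^sub>1 x))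
     \<diamond> FA (U1 \<odot>\<^sub>1 x) (tnm D1 coev (idm D1 x)) ((x \<odot>\<^sub>1 xs) \<odot>\<^sub>1 x) \<diamond> FA x (dag D1 (lun D1 x)) (U1 \<odot>\<^sub>1 x)"
      using s t by (simp add: FA_cmp[where b = "x \<odot>\<^sub>1 U1"] FA_cmp[where b = "x \<odot>\<^sub>1 (xs \<odot>\<^sub>1 x)"]
          FA_cmp[where b = "(x \<odot>\<^sub>1 xs) \<odot>\<^sub>1 x"] FA_cmp[where b = "U1 \<odot>\<^sub>1 x"])
    finally show ?thesis by simp
  qed
  also have "\<dots> = C2.Id ?a" using x by (simp add: FA_id)
  finally show ?thesis .
qed


lemma uni_FA: assumes "unitary D1 f a b" shows "C2.uni (FA a f b)"
proof -
  have f: "f \<in> Hom D1 a b" "cmp D1 (dag D1 f) f = idm D1 a" "cmp D1 f (dag D1 f) = idm D1 b"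
    using assms unfolding unitary_def by auto
  have o: "a \<in> Obj D1" "b \<in> Obj D1" using f C1.hom_obj by auto
  have 1: "(FA a f b)\<^sup>\<ddagger> \<diamond> FA a f b = C2.Id (Fo a)"
    using f o FA_cmp[of f a b "dag D1 f" a] FA_dag[of f a b] C1.ty_dag[of f a b] FA_id[of a] by simp
  have 2: "FA a f b \<diamond> (FA a f b)\<^sup>\<ddagger> = C2.Id (Fo b)"
    using f o FA_cmp[of "dag D1 f" b a f b] FA_dag[of f a b] C1.ty_dag[of f a b] FA_id[of b] by simp
  show ?thesis unfolding C2.uni_def using 1 2 f by simp
qed

lemma ucan_tail: "C2.uni u \<Longrightarrow> u \<diamond> u\<^sup>\<ddagger> = C2.Id (tg u)"
  unfolding C2.uni_def by simp
lemma ucan_l_tail: "C2.uni u \<Longrightarrow> c \<in> Obj D2 \<Longrightarrow> (C2.Id c \<oslash> u) \<diamond> (C2.Id c \<oslash> u\<^sup>\<ddagger>) = C2.Id (c \<odot>\<^sub>2 tg u)"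
  using C2.ucan_l[of u c "C2.Id (c \<odot>\<^sub>2 tg u)"] C2.uni_good[of u] C2.good_obj[of u]
  by (simp add: C2.aidr)

lemma M_asc_inv: assumes o: "a \<in> Obj D1" "b \<in> Obj D1" "c \<in> Obj D1"
  shows "M (a \<odot>\<^sub>1 b) c \<diamond> (M a b \<oslash> C2.Id (Fo c)) \<diamond> (C2.As (Fo a) (Fo b) (Fo c))\<^sup>\<ddagger> \<diamond> (C2.Id (Fo a) \<oslash> (M b c)\<^sup>\<ddagger>)
    = FA (a \<odot>\<^sub>1 (b \<odot>\<^sub>1 c)) (dag D1 (asc D1 a b c)) ((a \<odot>\<^sub>1 b) \<odot>\<^sub>1 c) \<diamond> M a (b \<odot>\<^sub>1 c)"
proof -
  let ?F = "FA ((a \<odot>\<^sub>1 b) \<odot>\<^sub>1 c) (asc D1 a b c) (a \<odot>\<^sub>1 (b \<odot>\<^sub>1 c))"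
  have uF: "C2.uni ?F" using uni_FA C1.u_asc' o by blast
  have tA: "asc D1 a b c \<in> Hom D1 ((a \<odot>\<^sub>1 b) \<odot>\<^sub>1 c) (a \<odot>\<^sub>1 (b \<odot>\<^sub>1 c))" using o by (simp add: C1.ty_asc)
  have "M (a \<odot>\<^sub>1 b) c \<diamond> (M a b \<oslash> C2.Id (Fo c)) \<diamond> (C2.As (Fo a) (Fo b) (Fo c))\<^sup>\<ddagger> \<diamond> (C2.Id (Fo a) \<oslash> (M b c)\<^sup>\<ddagger>)
     = ?F\<^sup>\<ddagger> \<diamond> ?F \<diamond> M (a \<odot>\<^sub>1 b) c \<diamond> (M a b \<oslash> C2.Id (Fo c)) \<diamond> (C2.As (Fo a) (Fo b) (Fo c))\<^sup>\<ddagger> \<diamond> (C2.Id (Fo a) \<oslash> (M b c)\<^sup>\<ddagger>)"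
    using C2.ucan[of "?F\<^sup>\<ddagger>"] uF o tA by (simp add: C2.uniI C2.dgr_dgr)
  also have "\<dots> = ?F\<^sup>\<ddagger> \<diamond> M a (b \<odot>\<^sub>1 c) \<diamond> (C2.Id (Fo a) \<oslash> M b c) \<diamond> C2.As (Fo a) (Fo b) (Fo c)
     \<diamond> (C2.As (Fo a) (Fo b) (Fo c))\<^sup>\<ddagger> \<diamond> (C2.Id (Fo a) \<oslash> (M b c)\<^sup>\<ddagger>)"
    using C2.ext3[OF M_asc[of a b c]] o by (simp only: C2.cassoc)
  also have "\<dots> = ?F\<^sup>\<ddagger> \<diamond> M a (b \<odot>\<^sub>1 c) \<diamond> (C2.Id (Fo a) \<oslash> M b c) \<diamond> (C2.Id (Fo a) \<oslash> (M b c)\<^sup>\<ddagger>)"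
    using o uni_M by (simp add: C2.ucan C2.uniI)
  also have "\<dots> = ?F\<^sup>\<ddagger> \<diamond> M a (b \<odot>\<^sub>1 c)"
    using o uni_M tA by (simp add: ucan_l_tail C2.aidr)
  finally show ?thesis using tA by (simp add: FA_dag)
qed

lemma img_z2:
  assumes x: "x \<in> Obj D1" and xs: "xs \<in> Obj D1"
    and ev: "ev \<in> Hom D1 (xs \<odot>\<^sub>1 x) U1" and coev: "coev \<in> Hom D1 U1 (x \<odot>\<^sub>1 xs)"
    and z: "cmp D1 (lun D1 xs) (cmp D1 (tnm D1 ev (idm D1 xs)) (cmp D1 (dag D1 (asc D1 xs x xs))
        (cmp D1 (tnm D1 (idm D1 xs) coev) (dag D1 (run D1 xs))))) = idm D1 xs"
  shows "C2.Lm (Fo xs) (Fo x) (Fo xs) (E\<^sup>\<ddagger> \<diamond> FA (xs \<odot>\<^sub>1 x) ev U1 \<diamond> M xs x) ((M x xs)\<^sup>\<ddagger> \<diamond> FA U1 coev (x \<odot>\<^sub>1 xs) \<diamond> E)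
     = C2.Id (Fo xs)"
proof -
  let ?a = "Fo x" and ?b = "Fo xs"
  have o: "?a \<in> Obj D2" "?b \<in> Obj D2" "U1 \<in> Obj D1" "U2 \<in> Obj D2" "Fo U1 \<in> Obj D2" using x xs by auto
  have t: "idm D1 xs \<in> Hom D1 xs xs" "run D1 xs \<in> Hom D1 (xs \<odot>\<^sub>1 U1) xs" "lun D1 xs \<in> Hom D1 (U1 \<odot>\<^sub>1 xs) xs"
     "dag D1 (asc D1 xs x xs) \<in> Hom D1 (xs \<odot>\<^sub>1 (x \<odot>\<^sub>1 xs)) ((xs \<odot>\<^sub>1 x) \<odot>\<^sub>1 xs)"
     "tnm D1 ev (idm D1 xs) \<in> Hom D1 ((xs \<odot>\<^sub>1 x) \<odot>\<^sub>1 xs) (U1 \<odot>\<^sub>1 xs)"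
     "tnm D1 (idm D1 xs) coev \<in> Hom D1 (xs \<odot>\<^sub>1 U1) (xs \<odot>\<^sub>1 (x \<odot>\<^sub>1 xs))"
     "dag D1 (run D1 xs) \<in> Hom D1 xs (xs \<odot>\<^sub>1 U1)"
     "asc D1 xs x xs \<in> Hom D1 ((xs \<odot>\<^sub>1 x) \<odot>\<^sub>1 xs) (xs \<odot>\<^sub>1 (x \<odot>\<^sub>1 xs))"
    using x xs ev coev by (auto intro: ty1)
  have "C2.Lm ?b ?a ?b (E\<^sup>\<ddagger> \<diamond> FA (xs \<odot>\<^sub>1 x) ev U1 \<diamond> M xs x) ((M x xs)\<^sup>\<ddagger> \<diamond> FA U1 coev (x \<odot>\<^sub>1 xs) \<diamond> E)
    = FA (U1 \<odot>\<^sub>1 xs) (lun D1 xs) xs \<diamond> M U1 xs \<diamond> (E \<oslash> C2.Id ?b) \<diamond> (E\<^sup>\<ddagger> \<oslash> C2.Id ?b) \<diamond> (FA (xs \<odot>\<^sub>1 x) ev U1 \<oslash> C2.Id ?b)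
     \<diamond> (M xs x \<oslash> C2.Id ?b) \<diamond> (C2.As ?b ?a ?b)\<^sup>\<ddagger> \<diamond> (C2.Id ?b \<oslash> (M x xs)\<^sup>\<ddagger>) \<diamond> (C2.Id ?b \<oslash> FA U1 coev (x \<odot>\<^sub>1 xs))
     \<diamond> (C2.Id ?b \<oslash> E) \<diamond> (C2.Id ?b \<oslash> E\<^sup>\<ddagger>) \<diamond> (M xs U1)\<^sup>\<ddagger> \<diamond> (FA (xs \<odot>\<^sub>1 U1) (run D1 xs) xs)\<^sup>\<ddagger>"
    unfolding C2.Lm_def
    using x xs ev coev t o by (simp add: M_run M_lun C2.dgr_comp C2.dgr_tens C2.dgr_Id C2.interchange_l C2.interchange_r C2.cassoc)
  also have "\<dots> = FA (U1 \<odot>\<^sub>1 xs) (lun D1 xs) xs \<diamond> M U1 xs \<diamond> (FA (xs \<odot>\<^sub>1 x) ev U1 \<oslash> C2.Id ?b)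
     \<diamond> (M xs x \<oslash> C2.Id ?b) \<diamond> (C2.As ?b ?a ?b)\<^sup>\<ddagger> \<diamond> (C2.Id ?b \<oslash> (M x xs)\<^sup>\<ddagger>) \<diamond> (C2.Id ?b \<oslash> FA U1 coev (x \<odot>\<^sub>1 xs))
     \<diamond> (M xs U1)\<^sup>\<ddagger> \<diamond> (FA (xs \<odot>\<^sub>1 U1) (run D1 xs) xs)\<^sup>\<ddagger>"
    using x xs ev coev t o uni_E by (simp add: C2.ucan_l C2.ucan_r)
  also have "\<dots> = FA (U1 \<odot>\<^sub>1 xs) (lun D1 xs) xs \<diamond> FA ((xs \<odot>\<^sub>1 x) \<odot>\<^sub>1 xs) (tnm D1 ev (idm D1 xs)) (U1 \<odot>\<^sub>1 xs)
     \<diamond> M (xs \<odot>\<^sub>1 x) xs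
     \<diamond> (M xs x \<oslash> C2.Id ?b) \<diamond> (C2.As ?b ?a ?b)\<^sup>\<ddagger> \<diamond> (C2.Id ?b \<oslash> (M x xs)\<^sup>\<ddagger>) \<diamond> (C2.Id ?b \<oslash> FA U1 coev (x \<odot>\<^sub>1 xs))
     \<diamond> (M xs U1)\<^sup>\<ddagger> \<diamond> (FA (xs \<odot>\<^sub>1 U1) (run D1 xs) xs)\<^sup>\<ddagger>"
  proof -
    have tt: "M U1 xs \<diamond> (FA (xs \<odot>\<^sub>1 x) ev U1 \<oslash> C2.Id ?b) = FA ((xs \<odot>\<^sub>1 x) \<odot>\<^sub>1 xs) (tnm D1 ev (idm D1 xs)) (U1 \<odot>\<^sub>1 xs) \<diamond> M (xs \<odot>\<^sub>1 x) xs"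
      using M_nat[of ev "xs \<odot>\<^sub>1 x" U1 "idm D1 xs" xs xs] xs ev t by (simp add: FA_id)
    show ?thesis using C2.ext[OF tt] by (simp only: C2.cassoc)
  qed
  also have "\<dots> = FA (U1 \<odot>\<^sub>1 xs) (lun D1 xs) xs \<diamond> FA ((xs \<odot>\<^sub>1 x) \<odot>\<^sub>1 xs) (tnm D1 ev (idm D1 xs)) (U1 \<odot>\<^sub>1 xs)
     \<diamond> FA (xs \<odot>\<^sub>1 (x \<odot>\<^sub>1 xs)) (dag D1 (asc D1 xs x xs)) ((xs \<odot>\<^sub>1 x) \<odot>\<^sub>1 xs) \<diamond> M xs (x \<odot>\<^sub>1 xs)
     \<diamond> (C2.Id ?b \<oslash> FA U1 coev (x \<odot>\<^sub>1 xs))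
     \<diamond> (M xs U1)\<^sup>\<ddagger> \<diamond> (FA (xs \<odot>\<^sub>1 U1) (run D1 xs) xs)\<^sup>\<ddagger>"
    using C2.ext4[OF M_asc_inv[of xs x xs]] x xs by (simp only: C2.cassoc)
  also have "\<dots> = FA (U1 \<odot>\<^sub>1 xs) (lun D1 xs) xs \<diamond> FA ((xs \<odot>\<^sub>1 x) \<odot>\<^sub>1 xs) (tnm D1 ev (idm D1 xs)) (U1 \<odot>\<^sub>1 xs)
     \<diamond> FA (xs \<odot>\<^sub>1 (x \<odot>\<^sub>1 xs)) (dag D1 (asc D1 xs x xs)) ((xs \<odot>\<^sub>1 x) \<odot>\<^sub>1 xs)
     \<diamond> FA (xs \<odot>\<^sub>1 U1) (tnm D1 (idm D1 xs) coev) (xs \<odot>\<^sub>1 (x \<odot>\<^sub>1 xs)) \<diamond> M xs U1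
     \<diamond> (M xs U1)\<^sup>\<ddagger> \<diamond> (FA (xs \<odot>\<^sub>1 U1) (run D1 xs) xs)\<^sup>\<ddagger>"
  proof -
    have tt: "M xs (x \<odot>\<^sub>1 xs) \<diamond> (C2.Id ?b \<oslash> FA U1 coev (x \<odot>\<^sub>1 xs)) = FA (xs \<odot>\<^sub>1 U1) (tnm D1 (idm D1 xs) coev) (xs \<odot>\<^sub>1 (x \<odot>\<^sub>1 xs)) \<diamond> M xs U1"
      using M_nat[of "idm D1 xs" xs xs coev U1 "x \<odot>\<^sub>1 xs"] xs coev t by (simp add: FA_id)
    show ?thesis using C2.ext[OF tt] by (simp only: C2.cassoc)
  qed
  also have "\<dots> = FA (U1 \<odot>\<^sub>1 xs) (lun D1 xs) xs \<diamond> FA ((xs \<odot>\<^sub>1 x) \<odot>\<^sub>1 xs) (tnm D1 ev (idm D1 xs)) (U1 \<odot>\<^sub>1 xs)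
     \<diamond> FA (xs \<odot>\<^sub>1 (x \<odot>\<^sub>1 xs)) (dag D1 (asc D1 xs x xs)) ((xs \<odot>\<^sub>1 x) \<odot>\<^sub>1 xs)
     \<diamond> FA (xs \<odot>\<^sub>1 U1) (tnm D1 (idm D1 xs) coev) (xs \<odot>\<^sub>1 (x \<odot>\<^sub>1 xs)) \<diamond> FA xs (dag D1 (run D1 xs)) (xs \<odot>\<^sub>1 U1)"
    using x xs ev coev t o uni_M by (simp add: C2.ucan FA_dag)
  also have "\<dots> = FA xs (idm D1 xs) xs"
  proof -
    have s: "cmp D1 (tnm D1 (idm D1 xs) coev) (dag D1 (run D1 xs)) \<in> Hom D1 xs (xs \<odot>\<^sub>1 (x \<odot>\<^sub>1 xs))"
       "cmp D1 (dag D1 (asc D1 xs x xs)) (cmp D1 (tnm D1 (idm D1 xs) coev) (dag D1 (run D1 xs))) \<in> Hom D1 xs ((xs \<odot>\<^sub>1 x) \<odot>\<^sub>1 xs)"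
       "cmp D1 (tnm D1 ev (idm D1 xs)) (cmp D1 (dag D1 (asc D1 xs x xs)) (cmp D1 (tnm D1 (idm D1 xs) coev) (dag D1 (run D1 xs)))) \<in> Hom D1 xs (U1 \<odot>\<^sub>1 xs)"
      using t by (auto intro: ty1)
    have "FA xs (idm D1 xs) xs = FA xs (cmp D1 (lun D1 xs) (cmp D1 (tnm D1 ev (idm D1 xs)) (cmp D1 (dag D1 (asc D1 xs x xs))
        (cmp D1 (tnm D1 (idm D1 xs) coev) (dag D1 (run D1 xs)))))) xs" using z by simp
    also have "\<dots> = FA (U1 \<odot>\<^sub>1 xs) (lun D1 xs) xs \<diamond> FA ((xs \<odot>\<^sub>1 x) \<odot>\<^sub>1 xs) (tnm D1 ev (idm D1 xs)) (U1 \<odot>\<^sub>1 xs)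
     \<diamond> FA (xs \<odot>\<^sub>1 (x \<odot>\<^sub>1 xs)) (dag D1 (asc D1 xs x xs)) ((xs \<odot>\<^sub>1 x) \<odot>\<^sub>1 xs)
     \<diamond> FA (xs \<odot>\<^sub>1 U1) (tnm D1 (idm D1 xs) coev) (xs \<odot>\<^sub>1 (x \<odot>\<^sub>1 xs)) \<diamond> FA xs (dag D1 (run D1 xs)) (xs \<odot>\<^sub>1 U1)"
      using s t by (simp add: FA_cmp[where b = "U1 \<odot>\<^sub>1 xs"] FA_cmp[where b = "(xs \<odot>\<^sub>1 x) \<odot>\<^sub>1 xs"]
          FA_cmp[where b = "xs \<odot>\<^sub>1 (x \<odot>\<^sub>1 xs)"] FA_cmp[where b = "xs \<odot>\<^sub>1 U1"])
    finally show ?thesis by simp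
  qed
  also have "\<dots> = C2.Id ?b" using xs by (simp add: FA_id)
  finally show ?thesis .
qed

lemma img_rel:
  assumes x: "x \<in> Obj D1" and xs: "xs \<in> Obj D1"
    and ev: "ev \<in> Hom D1 (xs \<odot>\<^sub>1 x) U1" and coev: "coev \<in> Hom D1 U1 (x \<odot>\<^sub>1 xs)"
    and P: "P \<in> Hom D1 x x"
    and r: "cmp D1 (brd D1 xs x) (dag D1 ev) = cmp D1 (tnm D1 P (idm D1 xs)) coev"
  shows "C2.Br (Fo xs) (Fo x) \<diamond> (E\<^sup>\<ddagger> \<diamond> FA (xs \<odot>\<^sub>1 x) ev U1 \<diamond> M xs x)\<^sup>\<ddagger>
     = (FA x P x \<oslash> C2.Id (Fo xs)) \<diamond> ((M x xs)\<^sup>\<ddagger> \<diamond> FA U1 coev (x \<odot>\<^sub>1 xs) \<diamond> E)"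
proof -
  have o: "Fo x \<in> Obj D2" "Fo xs \<in> Obj D2" "U1 \<in> Obj D1" using x xs by auto
  have t: "brd D1 xs x \<in> Hom D1 (xs \<odot>\<^sub>1 x) (x \<odot>\<^sub>1 xs)" "dag D1 ev \<in> Hom D1 U1 (xs \<odot>\<^sub>1 x)"
    "tnm D1 P (idm D1 xs) \<in> Hom D1 (x \<odot>\<^sub>1 xs) (x \<odot>\<^sub>1 xs)" "idm D1 xs \<in> Hom D1 xs xs"
    using x xs ev P by (auto intro: ty1)
  have br: "C2.Br (Fo xs) (Fo x) = (M x xs)\<^sup>\<ddagger> \<diamond> FA (xs \<odot>\<^sub>1 x) (brd D1 xs x) (x \<odot>\<^sub>1 xs) \<diamond> M xs x"
  proof -
    have "C2.Br (Fo xs) (Fo x) = (M x xs)\<^sup>\<ddagger> \<diamond> M x xs \<diamond> C2.Br (Fo xs) (Fo x)"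
      using uni_M[of x xs] x xs C2.ucan[of "(M x xs)\<^sup>\<ddagger>" "C2.Br (Fo xs) (Fo x)"] by (simp add: C2.uniI C2.dgr_dgr)
    also have "\<dots> = (M x xs)\<^sup>\<ddagger> \<diamond> FA (xs \<odot>\<^sub>1 x) (brd D1 xs x) (x \<odot>\<^sub>1 xs) \<diamond> M xs x"
      using M_brd[of xs x] x xs by simp
    finally show ?thesis .
  qed
  have "C2.Br (Fo xs) (Fo x) \<diamond> (E\<^sup>\<ddagger> \<diamond> FA (xs \<odot>\<^sub>1 x) ev U1 \<diamond> M xs x)\<^sup>\<ddagger>
     = (M x xs)\<^sup>\<ddagger> \<diamond> FA (xs \<odot>\<^sub>1 x) (brd D1 xs x) (x \<odot>\<^sub>1 xs) \<diamond> M xs x \<diamond> (M xs x)\<^sup>\<ddagger> \<diamond> (FA (xs \<odot>\<^sub>1 x) ev U1)\<^sup>\<ddagger> \<diamond> E"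
    unfolding br by (simp add: C2.dgr_comp C2.dgr_dgr C2.cassoc)
  also have "\<dots> = (M x xs)\<^sup>\<ddagger> \<diamond> FA (xs \<odot>\<^sub>1 x) (brd D1 xs x) (x \<odot>\<^sub>1 xs) \<diamond> FA U1 (dag D1 ev) (xs \<odot>\<^sub>1 x) \<diamond> E"
    using uni_M[of xs x] x xs ev by (simp add: C2.ucan FA_dag)
  also have "\<dots> = (M x xs)\<^sup>\<ddagger> \<diamond> FA U1 (cmp D1 (tnm D1 P (idm D1 xs)) coev) (x \<odot>\<^sub>1 xs) \<diamond> E"
    using r[symmetric] t FA_cmp[of "dag D1 ev" U1 "xs \<odot>\<^sub>1 x" "brd D1 xs x" "x \<odot>\<^sub>1 xs"] by (simp add: C2.cassoc)
  also have "\<dots> = (M x xs)\<^sup>\<ddagger> \<diamond> FA (x \<odot>\<^sub>1 xs) (tnm D1 P (idm D1 xs)) (x \<odot>\<^sub>1 xs) \<diamond> FA U1 coev (x \<odot>\<^sub>1 xs) \<diamond> E"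
    using t coev FA_cmp[of coev U1 "x \<odot>\<^sub>1 xs" "tnm D1 P (idm D1 xs)" "x \<odot>\<^sub>1 xs"] by (simp add: C2.cassoc)
  also have "\<dots> = (FA x P x \<oslash> C2.Id (Fo xs)) \<diamond> (M x xs)\<^sup>\<ddagger> \<diamond> FA U1 coev (x \<odot>\<^sub>1 xs) \<diamond> E"
  proof -
    have "M x xs \<diamond> (FA x P x \<oslash> FA xs (idm D1 xs) xs) = FA (x \<odot>\<^sub>1 xs) (tnm D1 P (idm D1 xs)) (x \<odot>\<^sub>1 xs) \<diamond> M x xs"
      using M_nat[of P x x "idm D1 xs" xs xs] P t by simp
    then have "(M x xs)\<^sup>\<ddagger> \<diamond> FA (x \<odot>\<^sub>1 xs) (tnm D1 P (idm D1 xs)) (x \<odot>\<^sub>1 xs) = (FA x P x \<oslash> FA xs (idm D1 xs) xs) \<diamond> (M x xs)\<^sup>\<ddagger>"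
      by (rule C2.swap[rotated 8]) (use uni_M x xs P t in auto)
    then have tt: "(M x xs)\<^sup>\<ddagger> \<diamond> FA (x \<odot>\<^sub>1 xs) (tnm D1 P (idm D1 xs)) (x \<odot>\<^sub>1 xs) = (FA x P x \<oslash> C2.Id (Fo xs)) \<diamond> (M x xs)\<^sup>\<ddagger>"
      using xs by (simp add: FA_id)
    show ?thesis using C2.ext[OF tt] by (simp only: C2.cassoc)
  qed
  finally show ?thesis by (simp add: C2.cassoc)
qed

end

theorem mainTheorem3:
  fixes D1 :: "('o, 'm) dcat" and D2 :: "('p, 'n) dcat"
    and Fo :: "'o \<Rightarrow> 'p" and Fm :: "'m \<Rightarrow> 'n"
    and mu :: "'o \<Rightarrow> 'o \<Rightarrow> 'n" and eps :: 'n
  assumes "is_fermionically_dagger_compact D1"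
    and "is_fermionically_dagger_compact D2"
    and "is_sym_monoidal_dagger_functor D1 D2 Fo Fm mu eps"
    and "\<forall>c \<in> Obj D2. \<forall>f. f \<in> Hom D2 c c \<and> cmp D2 f f = idm D2 c \<and> iso_positive D2 f c
           \<longrightarrow> f = idm D2 c"
  shows "\<forall>x \<in> Obj D1. Fm (par D1 x) = par D2 (Fo x)"
proof -
  have s1: "is_sym_monoidal_dagger_category D1" and b1: "is_BZ2_action D1"
    and d1: "\<forall>x \<in> Obj D1. \<exists>xs ev coev. is_duality D1 x xs ev coev \<and>
        cmp D1 (brd D1 xs x) (dag D1 ev) = cmp D1 (tnm D1 (par D1 x) (idm D1 xs)) coev"
    using assms(1) unfolding is_fermionically_dagger_compact_def by auto
  have s2: "is_sym_monoidal_dagger_category D2" and b2: "is_BZ2_action D2"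
    and d2: "\<forall>x \<in> Obj D2. \<exists>xs ev coev. is_duality D2 x xs ev coev \<and>
        cmp D2 (brd D2 xs x) (dag D2 ev) = cmp D2 (tnm D2 (par D2 x) (idm D2 xs)) coev"
    using assms(2) unfolding is_fermionically_dagger_compact_def by auto
  interpret mfun D1 D2 Fo Fm mu eps
    by (intro mfun.intro smc.intro mfun_axioms.intro s1 s2 assms(3))
  show ?thesis
  proof
    fix x assume x: "x \<in> Obj D1"
    let ?a = "Fo x"
    have a: "?a \<in> Obj D2" using x by simp
    obtain xs ev coev where dx: "is_duality D1 x xs ev coev"
      and rx: "cmp D1 (brd D1 xs x) (dag D1 ev) = cmp D1 (tnm D1 (par D1 x) (idm D1 xs)) coev"
      using d1 x by blast
    obtain ys ev' coev' where dy: "is_duality D2 ?a ys ev' coev'"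
      and ry: "cmp D2 (brd D2 ys ?a) (dag D2 ev') = cmp D2 (tnm D2 (par D2 ?a) (idm D2 ys)) coev'"
      using d2 a by blast
    have xs: "xs \<in> Obj D1" and ev: "ev \<in> Hom D1 (tno D1 xs x) (unt D1)"
      and coev: "coev \<in> Hom D1 (unt D1) (tno D1 x xs)"
      and zx1: "cmp D1 (run D1 x) (cmp D1 (tnm D1 (idm D1 x) ev) (cmp D1 (asc D1 x xs x)
        (cmp D1 (tnm D1 coev (idm D1 x)) (dag D1 (lun D1 x))))) = idm D1 x"
      and zx2: "cmp D1 (lun D1 xs) (cmp D1 (tnm D1 ev (idm D1 xs)) (cmp D1 (dag D1 (asc D1 xs x xs))
        (cmp D1 (tnm D1 (idm D1 xs) coev) (dag D1 (run D1 xs))))) = idm D1 xs"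
      using dx unfolding is_duality_def by auto
    have ys: "ys \<in> Obj D2" and ev': "ev' \<in> Hom D2 (tno D2 ys ?a) (unt D2)"
      and coev': "coev' \<in> Hom D2 (unt D2) (tno D2 ?a ys)"
      and zy1: "cmp D2 (run D2 ?a) (cmp D2 (tnm D2 (idm D2 ?a) ev') (cmp D2 (asc D2 ?a ys ?a)
        (cmp D2 (tnm D2 coev' (idm D2 ?a)) (dag D2 (lun D2 ?a))))) = idm D2 ?a"
      and zy2: "cmp D2 (lun D2 ys) (cmp D2 (tnm D2 ev' (idm D2 ys)) (cmp D2 (dag D2 (asc D2 ys ?a ys))
        (cmp D2 (tnm D2 (idm D2 ys) coev') (dag D2 (run D2 ys))))) = idm D2 ys"
      using dy unfolding is_duality_def by auto
    have P1: "par D1 x \<in> Hom D1 x x" "cmp D1 (par D1 x) (par D1 x) = idm D1 x"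
      using b1 x unfolding is_BZ2_action_def by auto
    have P2: "par D2 ?a \<in> Hom D2 ?a ?a" "cmp D2 (par D2 ?a) (par D2 ?a) = idm D2 ?a"
      using b2 a unfolding is_BZ2_action_def by auto
    have nat2: "\<forall>a b f. f \<in> Hom D2 a b \<longrightarrow> cmp D2 (par D2 b) f = cmp D2 f (par D2 a)"
      using b2 unfolding is_BZ2_action_def by auto
    have FP: "Fm (par D1 x) \<in> Hom D2 ?a ?a" using P1 F_hom' by blast
    define e1 where "e1 = C2.Ar (tno D2 ys ?a) ev' (unt D2)"
    define c1 where "c1 = C2.Ar (unt D2) coev' (tno D2 ?a ys)"
    define e2 where "e2 = E\<^sup>\<ddagger> \<diamond> FA (xs \<odot>\<^sub>1 x) ev U1 \<diamond> M xs x"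
    define c2 where "c2 = (M x xs)\<^sup>\<ddagger> \<diamond> FA U1 coev (x \<odot>\<^sub>1 xs) \<diamond> E"
    define A where "A = FA x (par D1 x) x"
    define B where "B = C2.Ar ?a (par D2 ?a) ?a"
    have "A = B"
    proof (rule C2.core[of ?a ys "Fo xs" e1 c1 e2 c2])
      show "?a \<in> Obj D2" "ys \<in> Obj D2" "Fo xs \<in> Obj D2" using a ys xs by auto
      show "C2.good e1" "sr e1 = ys \<odot>\<^sub>2 ?a" "tg e1 = U2" unfolding e1_def using ev' by auto
      show "C2.good c1" "sr c1 = U2" "tg c1 = ?a \<odot>\<^sub>2 ys" unfolding c1_def using coev' by auto
      show "C2.good e2" "sr e2 = Fo xs \<odot>\<^sub>2 ?a" "tg e2 = U2" unfolding e2_def using ev x xs by auto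
      show "C2.good c2" "sr c2 = U2" "tg c2 = ?a \<odot>\<^sub>2 Fo xs" unfolding c2_def using coev x xs by auto
      show "C2.Ru ?a \<diamond> (C2.Id ?a \<oslash> e1) \<diamond> C2.As ?a ys ?a \<diamond> (c1 \<oslash> C2.Id ?a) \<diamond> (C2.Lu ?a)\<^sup>\<ddagger> = C2.Id ?a"
        unfolding e1_def c1_def apply (rule C2.arr_eqI) using a ys ev' coev' zy1 by (simp_all add: mrs)
      show "C2.Lm ys ?a ys e1 c1 = C2.Id ys"
        unfolding e1_def c1_def C2.Lm_def apply (rule C2.arr_eqI) using a ys ev' coev' zy2 by (simp_all add: mrs)
      show "C2.Ru ?a \<diamond> (C2.Id ?a \<oslash> e2) \<diamond> C2.As ?a (Fo xs) ?a \<diamond> (c2 \<oslash> C2.Id ?a) \<diamond> (C2.Lu ?a)\<^sup>\<ddagger> = C2.Id ?a"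
        unfolding e2_def c2_def by (rule img_z1[OF x xs ev coev zx1])
      show "C2.Lm (Fo xs) ?a (Fo xs) e2 c2 = C2.Id (Fo xs)"
        unfolding e2_def c2_def by (rule img_z2[OF x xs ev coev zx2])
      show "C2.good A" "sr A = ?a" "tg A = ?a" unfolding A_def using P1 by auto
      show "A \<diamond> A = C2.Id ?a" unfolding A_def using P1 x FA_cmp[of "par D1 x" x x "par D1 x" x] by (simp add: FA_id)
      show "C2.good B" "sr B = ?a" "tg B = ?a" unfolding B_def using P2 by auto
      show "B \<diamond> B = C2.Id ?a" unfolding B_def apply (rule C2.arr_eqI) using P2 a by (simp_all add: mrs)
      show "A \<diamond> B = B \<diamond> A" unfolding A_def B_def apply (rule C2.arr_eqI) using P1 P2 a FP nat2[rule_format, OF FP] by (simp_all add: mrs)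
      show "C2.Br ys ?a \<diamond> e1\<^sup>\<ddagger> = (B \<oslash> C2.Id ys) \<diamond> c1"
        unfolding e1_def c1_def B_def apply (rule C2.arr_eqI) using a ys ev' coev' P2 ry by (simp_all add: mrs)
      show "C2.Br (Fo xs) ?a \<diamond> e2\<^sup>\<ddagger> = (A \<oslash> C2.Id (Fo xs)) \<diamond> c2"
        unfolding e2_def c2_def A_def by (rule img_rel[OF x xs ev coev P1(1) rx])
    next
      fix R g k
      assume R: "C2.good R" "sr R = ys" "tg R = ys" "R \<diamond> R = C2.Id ys"
        and g: "C2.good g" "C2.good k" "sr g = ys" "tg g = Fo xs" "sr k = Fo xs" "tg k = ys"
        "g \<diamond> k = C2.Id (Fo xs)" "k \<diamond> g = C2.Id ys" "R = g\<^sup>\<ddagger> \<diamond> g"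
      have mR: "mr R \<in> Hom D2 ys ys" using R C2.goodD by fastforce
      have mg: "mr g \<in> Hom D2 ys (Fo xs)" "mr k \<in> Hom D2 (Fo xs) ys" using g C2.goodD by fastforce+
      have RR: "cmp D2 (mr R) (mr R) = idm D2 ys"
      proof -
        have "cmp D2 (mr R) (mr R) = mr (R \<diamond> R)" using C2.mr_comp[of R R] R(1-3) by simp
        also have "\<dots> = idm D2 ys" using R(4) ys by simp
        finally show ?thesis .
      qed
      have gk1: "cmp D2 (mr g) (mr k) = idm D2 (Fo xs)"
      proof -
        have "cmp D2 (mr g) (mr k) = mr (g \<diamond> k)" using C2.mr_comp[of g k] g(1-6) by simp
        also have "\<dots> = idm D2 (Fo xs)" using g(7) xs by simp
        finally show ?thesis .
      qed
      have gk2: "cmp D2 (mr k) (mr g) = idm D2 ys"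
      proof -
        have "cmp D2 (mr k) (mr g) = mr (k \<diamond> g)" using C2.mr_comp[of k g] g(1-6) by simp
        also have "\<dots> = idm D2 ys" using g(8) ys by simp
        finally show ?thesis .
      qed
      note gk = gk1 gk2
      have "mr R = mr (g\<^sup>\<ddagger> \<diamond> g)" using g by simp
      then have Rg: "mr R = cmp D2 (dag D2 (mr g)) (mr g)" using g by (simp add: mrs)
      have iso: "iso D2 (mr g) ys (Fo xs)" unfolding iso_def using mg gk by blast
      have "iso_positive D2 (mr R) ys" unfolding iso_positive_def using mR iso Rg by blast
      then have "mr R = idm D2 ys" using assms(4) ys mR RR by blast
      then show "R = C2.Id ys" using R ys by (intro C2.arr_eqI) auto
    qed
    then have "mr A = mr B" by simp
    then show "Fm (par D1 x) = par D2 (Fo x)" unfolding A_def B_def using P1 P2 by simp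
  qed
qed


end
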